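(* Let $r,K,\mu$ satisfy Assumption 1, $a>0$ and $c\in\mathbb R$. If $(w,m)\in C^0([-a,a])^2$ is a solution of the localized problem (P$_a$), then $w(x)>0$ and $m(x)>0$ for all $x\in[-a,a)$.
   Context: Assumption 1: $r\in(1,\infty)$, $\mu\in\left(0,\min\left(\frac r2,1-\frac1r,1-K,K\right)\right)$, $K\in\left(0,\min\left(1,\frac{r}{r-1}\left(1-\frac{\mu}{1-\mu}\right)\right)\right)$. $f_w(w,m):=w(1-(w+m))+\mu(m-w)$, $f_m(w,m):=rm\left(1-\frac{w+m}{K}\right)+\mu(w-m)$; $(w^*,m^* )$ is the unique solution in $(0,1)\times(0,K)$ of $f_w=f_m=0$. The localized problem (P$_a$) for given $a>0$, $c\in\mathbb R$: $w,m\in C^0([-a,a])$ satisfy, in the weak (distributional) sense on $(-a,a)$, $-cw'-w''=f_w(w,m)\chi_{w\ge0}\chi_{m\ge0}$, $-cm'-m''=f_m(w,m)\chi_{w\ge0}\chi_{m\ge0}$, with boundary conditions $w(-a)=w^*$, $m(-a)=m^*$, $w(a)=m(a)=0$; here $\chi_{w\ge0}$ denotes the indicator of the set where $w\ge0$. *)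

theory Defs
  imports "HOL-Analysis.Analysis"
begin

definition assumption1 :: "real \<Rightarrow> real \<Rightarrow> real \<Rightarrow> bool" where
  "assumption1 r K \<mu> \<longleftrightarrow>
     1 < r \<and>
     0 < \<mu> \<and> \<mu> < min (min (r / 2) (1 - 1 / r)) (min (1 - K) K) \<and>
     0 < K \<and> K < min 1 (r / (r - 1) * (1 - \<mu> / (1 - \<mu>)))"

definition fw :: "real \<Rightarrow> real \<Rightarrow> real \<Rightarrow> real" where
  "fw \<mu> w m = w * (1 - (w + m)) + \<mu> * (m - w)"

definition fm :: "real \<Rightarrow> real \<Rightarrow> real \<Rightarrow> real \<Rightarrow> real \<Rightarrow> real" where
  "fm r K \<mu> w m = r * m * (1 - (w + m) / K) + \<mu> * (w - m)"

definition eqpt :: "real \<Rightarrow> real \<Rightarrow> real \<Rightarrow> real \<times> real" where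
  "eqpt r K \<mu> = (THE p. fst p \<in> {0<..<1} \<and> snd p \<in> {0<..<K} \<and>
                      fw \<mu> (fst p) (snd p) = 0 \<and> fm r K \<mu> (fst p) (snd p) = 0)"

definition test_fun :: "real \<Rightarrow> (real \<Rightarrow> real) \<Rightarrow> bool" where
  "test_fun a \<phi> \<longleftrightarrow> (\<forall>n. \<forall>x. ((deriv ^^ n) \<phi>) differentiable (at x)) \<and>
     (\<exists>\<epsilon>>0. \<forall>x. a - \<epsilon> \<le> \<bar>x\<bar> \<longrightarrow> \<phi> x = 0)"

text \<open>Weak (distributional) form of  -c u' - u'' = F  on (-a,a):
  integral of (c u phi' - u phi'') equals integral of F phi for every test function phi.\<close>
definition weak_sol :: "real \<Rightarrow> real \<Rightarrow> (real \<Rightarrow> real) \<Rightarrow> (real \<Rightarrow> real) \<Rightarrow> bool" where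
  "weak_sol a c u F \<longleftrightarrow> (\<forall>\<phi>. test_fun a \<phi> \<longrightarrow>
     integral {-a..a} (\<lambda>x. c * u x * deriv \<phi> x - u x * deriv (deriv \<phi>) x)
       = integral {-a..a} (\<lambda>x. F x * \<phi> x))"

definition chi :: "real \<Rightarrow> real \<Rightarrow> real" where
  "chi w m = (if 0 \<le> w \<and> 0 \<le> m then 1 else 0)"

definition Pa :: "real \<Rightarrow> real \<Rightarrow> real \<Rightarrow> real \<Rightarrow> real
                  \<Rightarrow> (real \<Rightarrow> real) \<Rightarrow> (real \<Rightarrow> real) \<Rightarrow> bool" where
  "Pa r K \<mu> a c w m \<longleftrightarrow>
     continuous_on {-a..a} w \<and> continuous_on {-a..a} m \<and>
     weak_sol a c w (\<lambda>x. fw \<mu> (w x) (m x) * chi (w x) (m x)) \<and>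
     weak_sol a c m (\<lambda>x. fm r K \<mu> (w x) (m x) * chi (w x) (m x)) \<and>
     w (-a) = fst (eqpt r K \<mu>) \<and> m (-a) = snd (eqpt r K \<mu>) \<and>
     w a = 0 \<and> m a = 0"

end

theory Submission
  imports Defs "HOL-Computational_Algebra.Polynomial"
begin


definition Qf :: "real \<Rightarrow> real \<Rightarrow> real \<Rightarrow> real \<Rightarrow> real" where
  "Qf r K \<mu> n = (1-n)*(r*(n/K-1)) - \<mu>*(r*(n/K-1) - (1-n))"

lemma Qf_root_unique:
  assumes "0<K" "K<1" "0<r" "0<\<mu>" "K<n1" "n1<1" "K<n2" "n2<1"
    "Qf r K \<mu> n1 = 0" "Qf r K \<mu> n2 = 0"
  shows "n1 = n2"
proof (rule ccontr)
  assume ne: "n1 \<noteq> n2"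
  define al where "al = -r/K"
  define be where "be = r*(1+K)/K - \<mu>*r/K - \<mu>"
  define ga where "ga = -r + \<mu>*r + \<mu>"
  have Q: "\<And>x. Qf r K \<mu> x = al*x^2 + be*x + ga"
    unfolding Qf_def al_def be_def ga_def using assms(1)
    by (simp add: field_simps power2_eq_square)
  have "(n1-n2)*(al*(n1+n2)+be) = 0"
    using assms(9,10) unfolding Q by (simp add: algebra_simps power2_eq_square)
  hence b: "be = -al*(n1+n2)" using ne by simp
  have g: "ga = al*n1*n2" using assms(9) unfolding Q b by (simp add: algebra_simps power2_eq_square)
  have "Qf r K \<mu> K = al*(K-n1)*(K-n2)" unfolding Q b g by (simp add: algebra_simps power2_eq_square)
  moreover have "al*(K-n1)*(K-n2) < 0"
  proof -
    have "(K-n1)*(K-n2) > 0" using assms by (simp add: mult_neg_neg)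
    moreover have "al < 0" unfolding al_def using assms by simp
    ultimately show ?thesis by (metis mult.assoc mult_neg_pos)
  qed
  moreover have "Qf r K \<mu> K = \<mu>*(1-K)" unfolding Qf_def using assms(1) by (simp add: algebra_simps)
  ultimately show False using assms by (smt (verit) mult_pos_pos)
qed

lemma eqpt_props:
  assumes A: "assumption1 r K \<mu>"
  shows "0 < fst (eqpt r K \<mu>) \<and> fst (eqpt r K \<mu>) < 1 \<and> 0 < snd (eqpt r K \<mu>) \<and> snd (eqpt r K \<mu>) < K"
proof -
  have r: "1 < r" and mu: "0 < \<mu>" "\<mu> < 1 - K" "\<mu> < K" and K: "0<K" "K<1"
    using A unfolding assumption1_def by auto
  define P where "P = (\<lambda>p::real\<times>real. fst p \<in> {0<..<1} \<and> snd p \<in> {0<..<K} \<and>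
                      fw \<mu> (fst p) (snd p) = 0 \<and> fm r K \<mu> (fst p) (snd p) = 0)"
  have char: "K < w+m \<and> w+m < 1 \<and> Qf r K \<mu> (w+m) = 0 \<and>
     w*((1-(w+m)) + r*((w+m)/K-1)) = (w+m)*(r*((w+m)/K-1))" if "P (w,m)" for w m
  proof -
    define n where "n = w+m"
    have w: "0<w" "w<1" and m: "0<m" "m<K" and e1: "fw \<mu> w m = 0" and e2: "fm r K \<mu> w m = 0"
      using that unfolding P_def by auto
    have sum: "w*(1-n) + r*m*(1-n/K) = 0" using e1 e2 unfolding fw_def fm_def n_def
      by (simp add: algebra_simps)
    have n1: "n < 1"
    proof (rule ccontr)
      assume "\<not> n<1"
      hence "1-n \<le> 0" "1 - n/K < 0" using K by (auto simp: field_simps)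
      hence "w*(1-n) \<le> 0" "r*m*(1-n/K) < 0" using w m r
        by (auto simp: mult_nonneg_nonpos mult_pos_neg)
      thus False using sum by linarith
    qed
    have n2: "K < n"
    proof (rule ccontr)
      assume "\<not> K<n"
      hence "1-n > 0" "1 - n/K \<ge> 0" using K by (auto simp: field_simps)
      hence "w*(1-n) > 0" "r*m*(1-n/K) \<ge> 0" using w m r by auto
      thus False using sum by linarith
    qed
    have "w*((1-n) + r*(n/K-1)) - n*(r*(n/K-1)) = w*(1-n) + r*m*(1-n/K)"
      unfolding n_def by (simp add: algebra_simps diff_divide_distrib add_divide_distrib)
    hence lin: "w*((1-n) + r*(n/K-1)) = n*(r*(n/K-1))"
      using sum by simp
    define A where "A = 1-n"
    define B where "B = r*(n/K-1)"
    have e: "w*A = \<mu>*(2*w - n)" using e1 unfolding fw_def n_def A_def by (simp add: algebra_simps)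
    have lin2: "w*(A+B) = n*B" using lin unfolding A_def B_def .
    have "w*A*(A+B) = \<mu>*(2*w - n)*(A+B)" using e by simp
    hence "w*A*(A+B) = \<mu>*(2*(w*(A+B)) - n*(A+B))" by (simp add: algebra_simps)
    hence "n*B*A = \<mu>*(2*(n*B) - n*(A+B))" unfolding lin2
      by (metis lin2 mult.commute mult.left_commute)
    hence "n*(A*B - \<mu>*(B - A)) = 0" by (simp add: algebra_simps)
    hence "n*((1-n)*(r*(n/K-1)) - \<mu>*(r*(n/K-1) - (1-n))) = 0" unfolding A_def B_def .
    hence "Qf r K \<mu> n = 0" unfolding Qf_def using n2 K by simp
    thus ?thesis using n1 n2 lin unfolding n_def by simp
  qed
  have ex: "\<exists>p. P p"
  proof -
    have cont: "continuous_on {K..1} (Qf r K \<mu>)" unfolding Qf_def using K by (intro continuous_intros) auto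
    have "Qf r K \<mu> 1 \<le> 0" "0 \<le> Qf r K \<mu> K"
      unfolding Qf_def using K mu r by (auto simp: field_simps)
    then obtain n where n: "K \<le> n" "n \<le> 1" "Qf r K \<mu> n = 0"
      using IVT2'[OF _ _ _ cont] K by force
    have QK: "Qf r K \<mu> K = \<mu>*(1-K)" "Qf r K \<mu> 1 = -\<mu>*(r*(1/K-1))" unfolding Qf_def using K by (auto simp: algebra_simps)
    have "n \<noteq> K" using QK n mu K by auto
    moreover have "n \<noteq> 1"
    proof
      assume "n = 1"
      hence "\<mu>*(r*(1/K-1)) = 0" using QK n by simp
      moreover have "r*(1/K-1) > 0" using K r by (simp add: field_simps)
      ultimately show False using mu by simp
    qed
    ultimately have nK: "K<n" "n<1" using n by auto
    define A where "A = 1-n"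
    define B where "B = r*(n/K-1)"
    have A: "0 < A" "A < 1" unfolding A_def using nK K by auto
    have B: "0 < B" unfolding B_def using nK K r by (simp add: field_simps)
    have QAB: "A*B - \<mu>*(B - A) = 0" using n(3) unfolding Qf_def A_def B_def by simp
    define w where "w = n*B/(A+B)"
    define m where "m = n*A/(A+B)"
    have wAB: "w*(A+B) = n*B" unfolding w_def using A B by simp
    have mAB: "m*(A+B) = n*A" unfolding m_def using A B by simp
    have nwm: "n = w + m" proof - have "w + m = n*(B+A)/(A+B)" unfolding w_def m_def by (simp add: add_divide_distrib[symmetric] distrib_left[symmetric]) thus ?thesis using A B by (simp add: add.commute) qed
    have "0 < w" unfolding w_def using A B nK K by simp
    moreover have "w < 1" proof -
      have "w < n" unfolding w_def using A B nK K by (simp add: field_simps)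
      thus ?thesis using nK by simp qed
    moreover have "0 < m" unfolding m_def using A B nK K by simp
    moreover have "m < K"
    proof -
      have "(n-K)*(A-r) < 0" using nK A r by (simp add: mult_pos_neg)
      moreover have KB: "K*B = r*(n-K)" unfolding B_def using K by (simp add: field_simps)
      ultimately have "n*A < K*(A+B)" by (simp add: algebra_simps)
      thus ?thesis unfolding m_def using A B by (simp add: field_simps)
    qed
    moreover have "fw \<mu> w m = 0"
    proof -
      have AB: "A+B \<noteq> 0" using A B by simp
      have "fw \<mu> w m = w*A + \<mu>*(m-w)" unfolding fw_def A_def nwm[symmetric] ..
      also have "\<dots> = (A*(w*(A+B)) + \<mu>*(m*(A+B) - w*(A+B)))/(A+B)"
        using AB by (simp add: field_simps)
      also have "\<dots> = (A*(n*B) + \<mu>*(n*A - n*B))/(A+B)"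
        using wAB mAB by simp
      also have "\<dots> = n*(A*B - \<mu>*(B - A))/(A+B)" by (simp add: algebra_simps)
      finally show ?thesis using QAB by simp
    qed
    moreover have "fm r K \<mu> w m = 0"
    proof -
      have e: "1 - (w+m)/K = -B/r" unfolding B_def using r K nwm by (simp add: field_simps)
      have AB: "A+B \<noteq> 0" using A B by simp
      have "fm r K \<mu> w m = -(m*B) + \<mu>*(w-m)" unfolding fm_def e using r by simp
      also have "\<dots> = (-(B*(m*(A+B))) + \<mu>*(w*(A+B) - m*(A+B)))/(A+B)"
        using AB by (simp add: field_simps)
      also have "\<dots> = (-(B*(n*A)) + \<mu>*(n*B - n*A))/(A+B)"
        using wAB mAB by simp
      also have "\<dots> = -n*(A*B - \<mu>*(B - A))/(A+B)" by (simp add: algebra_simps)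
      finally show ?thesis using QAB by simp
    qed
    ultimately show ?thesis unfolding P_def by (intro exI[of _ "(w,m)"]) auto
  qed
  have uq: "p = q" if "P p" "P q" for p q
  proof -
    obtain w1 m1 where p: "p = (w1,m1)" by fastforce
    obtain w2 m2 where q: "q = (w2,m2)" by fastforce
    note c1 = char[of w1 m1] and c2 = char[of w2 m2]
    have n: "w1+m1 = w2+m2"
      using c1 c2 that p q K r mu Qf_root_unique[of K r \<mu> "w1+m1" "w2+m2"] by auto
    define n where "n = w1+m1"
    have nn: "K < n" "n < 1" using c1 that p unfolding n_def by auto
    have "r*(n/K-1) > 0" using nn K r by (simp add: field_simps)
    hence pos: "(1-n) + r*(n/K-1) > 0" using nn by linarith
    have "w1*((1-n) + r*(n/K-1)) = w2*((1-n) + r*(n/K-1))"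
      using c1 c2 that p q n unfolding n_def by auto
    hence "w1 = w2" using pos by simp
    thus ?thesis using n p q by simp
  qed
  have "\<exists>!p. P p" using ex uq by blast
  hence "P (THE p. P p)" by (rule theI')
  moreover have "eqpt r K \<mu> = (THE p. P p)" unfolding eqpt_def P_def ..
  ultimately show ?thesis unfolding P_def by simp
qed



definition smn :: "nat \<Rightarrow> (real \<Rightarrow> real) \<Rightarrow> bool" where
  "smn n f \<longleftrightarrow> (\<forall>k\<le>n. \<forall>x. (deriv ^^ k) f differentiable (at x))"

definition sm :: "(real \<Rightarrow> real) \<Rightarrow> bool" where
  "sm f \<longleftrightarrow> (\<forall>n x. (deriv ^^ n) f differentiable (at x))"

lemma sm_iff: "sm f \<longleftrightarrow> (\<forall>n. smn n f)"
  unfolding sm_def smn_def by blast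

lemma smn_0: "smn 0 f \<longleftrightarrow> (\<forall>x. f differentiable (at x))"
  unfolding smn_def by auto

lemma smn_Suc: "smn (Suc n) f \<longleftrightarrow> (\<forall>x. f differentiable (at x)) \<and> smn n (deriv f)"
proof -
  have e: "(deriv ^^ Suc k) f = (deriv ^^ k) (deriv f)" for k
    by (simp add: funpow_Suc_right del: funpow.simps)
  show ?thesis unfolding smn_def
  proof safe
    fix k x assume "\<forall>k\<le>Suc n. \<forall>x. (deriv ^^ k) f differentiable at x" "k \<le> n"
    thus "(deriv ^^ k) (deriv f) differentiable at x" using e[of k] by (metis Suc_le_mono)
  next
    fix x assume "\<forall>k\<le>Suc n. \<forall>x. (deriv ^^ k) f differentiable at x"
    thus "f differentiable at x" by (metis funpow_0 le0)
  next
    fix k x assume a: "\<forall>x. f differentiable at x" "\<forall>k\<le>n. \<forall>x. (deriv ^^ k) (deriv f) differentiable at x"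
      "k \<le> Suc n"
    show "(deriv ^^ k) f differentiable at x"
    proof (cases k)
      case 0 thus ?thesis using a by simp
    next
      case (Suc j) thus ?thesis using a e[of j] by auto
    qed
  qed
qed

lemma smn_mono: "smn (Suc n) f \<Longrightarrow> smn n f"
  unfolding smn_def by auto

lemma smn_diff: "smn n f \<Longrightarrow> \<forall>x. f differentiable (at x)"
  unfolding smn_def by (metis funpow_0 le0)

lemma DERIV_of_diff: "(f::real\<Rightarrow>real) differentiable (at x) \<Longrightarrow> DERIV f x :> deriv f x"
  using DERIV_deriv_iff_real_differentiable by blast

lemma deriv_add_fun:
  fixes f g :: "real \<Rightarrow> real"
  assumes "\<forall>x. f differentiable (at x)" "\<forall>x. g differentiable (at x)"
  shows "deriv (\<lambda>x. f x + g x) = (\<lambda>x. deriv f x + deriv g x)"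
  using assms by (intro ext DERIV_imp_deriv DERIV_add DERIV_of_diff) auto

lemma deriv_mult_fun:
  fixes f g :: "real \<Rightarrow> real"
  assumes "\<forall>x. f differentiable (at x)" "\<forall>x. g differentiable (at x)"
  shows "deriv (\<lambda>x. f x * g x) = (\<lambda>x. deriv f x * g x + f x * deriv g x)"
proof (intro ext DERIV_imp_deriv)
  fix x
  have "DERIV (\<lambda>x. f x * g x) x :> deriv f x * g x + deriv g x * f x"
    using DERIV_mult[OF DERIV_of_diff DERIV_of_diff] assms by blast
  thus "DERIV (\<lambda>x. f x * g x) x :> deriv f x * g x + f x * deriv g x" by (simp add: mult.commute)
qed

lemma deriv_cmult_fun:
  fixes f :: "real \<Rightarrow> real"
  assumes "\<forall>x. f differentiable (at x)"
  shows "deriv (\<lambda>x. c * f x) = (\<lambda>x. c * deriv f x)"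
  using assms by (intro ext DERIV_imp_deriv DERIV_cmult DERIV_of_diff) auto

lemma deriv_affine_fun:
  fixes f :: "real \<Rightarrow> real"
  assumes "\<forall>x. f differentiable (at x)"
  shows "deriv (\<lambda>x. f (s*x+t)) = (\<lambda>x. s * deriv f (s*x+t))"
proof (intro ext DERIV_imp_deriv)
  fix x
  have "((\<lambda>x. s*x+t) has_real_derivative s) (at x)" by (auto intro!: derivative_eq_intros)
  from DERIV_chain2[OF DERIV_of_diff[OF assms[rule_format, of "s*x+t"]] this]
  show "((\<lambda>x. f (s*x+t)) has_real_derivative s * deriv f (s*x+t)) (at x)" by (simp add: mult.commute)
qed

lemma diff_add: "\<forall>x. (f::real\<Rightarrow>real) differentiable (at x) \<Longrightarrow> \<forall>x. g differentiable (at x) \<Longrightarrow> \<forall>x. (\<lambda>x. f x + g x) differentiable (at x)"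
  by (auto intro: differentiable_compose derivative_intros)

lemma smn_add: "smn n f \<Longrightarrow> smn n g \<Longrightarrow> smn n (\<lambda>x. f x + g x)"
proof (induction n arbitrary: f g)
  case 0 thus ?case unfolding smn_0 by (auto intro: derivative_intros)
next
  case (Suc n)
  have d: "\<forall>x. f differentiable (at x)" "\<forall>x. g differentiable (at x)" using Suc.prems smn_diff by blast+
  show ?case unfolding smn_Suc deriv_add_fun[OF d]
    using Suc d by (auto simp: smn_Suc intro: derivative_intros)
qed

lemma smn_cmult: "smn n f \<Longrightarrow> smn n (\<lambda>x. c * f x)"
proof (induction n arbitrary: f)
  case 0 thus ?case unfolding smn_0 by (auto intro: derivative_intros)
next
  case (Suc n)
  have d: "\<forall>x. f differentiable (at x)" using Suc.prems smn_diff by blast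
  show ?case unfolding smn_Suc deriv_cmult_fun[OF d]
    using Suc d by (auto simp: smn_Suc intro: derivative_intros)
qed

lemma smn_mult: "smn n f \<Longrightarrow> smn n g \<Longrightarrow> smn n (\<lambda>x. f x * g x)"
proof (induction n arbitrary: f g)
  case 0 thus ?case unfolding smn_0 by (auto intro: derivative_intros)
next
  case (Suc n)
  have d: "\<forall>x. f differentiable (at x)" "\<forall>x. g differentiable (at x)" using Suc.prems smn_diff by blast+
  have "smn n (\<lambda>x. deriv f x * g x)" using Suc.IH Suc.prems smn_mono by (auto simp: smn_Suc)
  moreover have "smn n (\<lambda>x. f x * deriv g x)" using Suc.IH Suc.prems smn_mono by (auto simp: smn_Suc)
  ultimately show ?case unfolding smn_Suc deriv_mult_fun[OF d]
    using d smn_add by (auto intro: derivative_intros)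
qed

lemma smn_affine: "smn n f \<Longrightarrow> smn n (\<lambda>x. f (s*x+t))"
proof (induction n arbitrary: f)
  case 0 thus ?case unfolding smn_0
    by (auto intro!: differentiable_compose[where f=f and g="\<lambda>x. s*x+t", unfolded o_def] derivative_intros)
next
  case (Suc n)
  have d: "\<forall>x. f differentiable (at x)" using Suc.prems smn_diff by blast
  have "smn n (\<lambda>x. deriv f (s*x+t))" using Suc by (auto simp: smn_Suc)
  hence "smn n (\<lambda>x. s * deriv f (s*x+t))" by (rule smn_cmult)
  moreover have "\<forall>x. (\<lambda>x. f (s*x+t)) differentiable (at x)"
    using d by (auto intro!: differentiable_compose[where f=f and g="\<lambda>x. s*x+t", unfolded o_def] derivative_intros)
  ultimately show ?case unfolding smn_Suc deriv_affine_fun[OF d] by simp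
qed

lemma sm_add: "sm f \<Longrightarrow> sm g \<Longrightarrow> sm (\<lambda>x. f x + g x)" by (simp add: sm_iff smn_add)
lemma sm_cmult: "sm f \<Longrightarrow> sm (\<lambda>x. c * f x)" by (simp add: sm_iff smn_cmult)
lemma sm_mult: "sm f \<Longrightarrow> sm g \<Longrightarrow> sm (\<lambda>x. f x * g x)" by (simp add: sm_iff smn_mult)
lemma sm_affine: "sm f \<Longrightarrow> sm (\<lambda>x. f (s*x+t))" by (simp add: sm_iff smn_affine)
lemma sm_diff: "sm f \<Longrightarrow> sm g \<Longrightarrow> sm (\<lambda>x. f x - g x)"
  using sm_add[of f "\<lambda>x. (-1) * g x"] sm_cmult[of g "-1"] by simp

lemma sm_differentiable: "sm f \<Longrightarrow> f differentiable (at x)"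
  unfolding sm_def by (metis funpow_0)

lemma sm_deriv: "sm f \<Longrightarrow> sm (deriv f)"
  unfolding sm_iff using smn_Suc by blast

lemma sm_from_deriv: "(\<forall>x. f differentiable (at x)) \<Longrightarrow> sm (deriv f) \<Longrightarrow> sm f"
  unfolding sm_iff by (metis smn_Suc smn_mono)

lemma sm_ode:
  assumes "\<And>x. (f has_real_derivative (c * f x + g x)) (at x)" "sm g"
  shows "sm f"
proof -
  have d: "deriv f = (\<lambda>x. c * f x + g x)" using assms(1) by (intro ext DERIV_imp_deriv) auto
  have df: "\<forall>x. f differentiable (at x)" using assms(1) real_differentiable_def by blast
  have "smn n f" for n
  proof (induction n)
    case 0 thus ?case using df smn_0 by blast
  next
    case (Suc n)
    have "smn n (\<lambda>x. c * f x + g x)" using Suc smn_add smn_cmult assms(2) sm_iff by blast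
    thus ?case using smn_Suc df d by simp
  qed
  thus ?thesis by (simp add: sm_iff)
qed



definition hp :: "real poly \<Rightarrow> real \<Rightarrow> real" where
  "hp p x = (if x > 0 then poly p (1/x) * exp (-(1/x)) else 0)"

definition hq :: "real poly \<Rightarrow> real poly" where
  "hq p = [:0,0,1:] * (p - pderiv p)"

lemma poly_exp_lim: "((\<lambda>t::real. poly (p::real poly) t * exp (-t)) \<longlongrightarrow> 0) at_top"
proof -
  have e: "poly p t * exp (-t) = (\<Sum>i\<le>degree p. coeff p i * (t ^ i / exp t))" for t
    unfolding poly_altdef by (simp add: sum_distrib_right exp_minus divide_inverse mult.assoc)
  have "((\<lambda>t. \<Sum>i\<le>degree p. coeff p i * (t ^ i / exp t)) \<longlongrightarrow> (\<Sum>i\<le>degree p. coeff p i * 0)) at_top"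
    by (intro tendsto_intros tendsto_power_div_exp_0)
  thus ?thesis unfolding e by simp
qed

lemma hp_lim0: "(hp p \<longlongrightarrow> 0) (at 0)"
proof (rule filterlim_split_at)
  show "(hp p \<longlongrightarrow> 0) (at_left 0)"
    by (rule tendsto_eventually) (auto simp: hp_def eventually_at_left_field intro: exI[of _ "-1"])
next
  have "((\<lambda>x. poly p (inverse x) * exp (-(inverse x))) \<longlongrightarrow> 0) (at_right 0)"
    using filterlim_compose[OF poly_exp_lim[of p] filterlim_inverse_at_top_right] by (simp add: o_def)
  moreover have "eventually (\<lambda>x. poly p (inverse x) * exp (-(inverse x)) = hp p x) (at_right 0)"
    by (auto simp: hp_def eventually_at_right_field inverse_eq_divide intro: exI[of _ 1])
  ultimately show "(hp p \<longlongrightarrow> 0) (at_right 0)" by (rule Lim_transform_eventually)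
qed

lemma hp_DERIV: "DERIV (hp p) x :> hp (hq p) x"
proof (cases "x > 0")
  case True
  have "DERIV (\<lambda>y. poly p (1/y) * exp (-(1/y))) x :>
     (-(1/x^2) * poly (pderiv p) (1/x)) * exp (-(1/x)) + (exp (-(1/x)) * (1/x^2)) * poly p (1/x)"
    using True by (auto intro!: derivative_eq_intros simp: power2_eq_square)
  moreover have "(-(1/x^2) * poly (pderiv p) (1/x)) * exp (-(1/x)) + (exp (-(1/x)) * (1/x^2)) * poly p (1/x)
      = hp (hq p) x" using True unfolding hp_def hq_def by (simp add: field_simps power2_eq_square)
  ultimately have "DERIV (\<lambda>y. poly p (1/y) * exp (-(1/y))) x :> hp (hq p) x" by simp
  thus ?thesis
    by (rule has_field_derivative_transform_within_open[where S="{0<..}"]) (use True in \<open>auto simp: hp_def\<close>)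
next
  case False
  show ?thesis
  proof (cases "x < 0")
    case True
    have "DERIV (\<lambda>y. 0) x :> hp (hq p) x" using True by (simp add: hp_def)
    thus ?thesis
      by (rule has_field_derivative_transform_within_open[where S="{..<0}"]) (use True in \<open>auto simp: hp_def\<close>)
  next
    case False
    hence x: "x = 0" using \<open>\<not> x > 0\<close> by simp
    have e: "(hp p (0+h) - hp p 0)/h = hp (pCons 0 p) h" for h
      by (simp add: hp_def field_simps)
    have "((\<lambda>h. (hp p (0+h) - hp p 0)/h) \<longlongrightarrow> 0) (at 0)" unfolding e by (rule hp_lim0)
    thus ?thesis unfolding x DERIV_def by (simp add: hp_def)
  qed
qed

lemma deriv_hp: "deriv (hp p) = hp (hq p)"
  using hp_DERIV DERIV_imp_deriv by blast

lemma funpow_deriv_hp: "(deriv ^^ n) (hp p) = hp ((hq ^^ n) p)"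
  by (induction n) (auto simp: deriv_hp)

lemma sm_hp: "sm (hp p)"
  unfolding sm_def funpow_deriv_hp using hp_DERIV real_differentiable_def by blast

definition h0 :: "real \<Rightarrow> real" where "h0 = hp 1"

lemma h0_alt: "h0 x = (if x > 0 then exp (-(1/x)) else 0)"
  by (simp add: h0_def hp_def)

lemma sm_h0: "sm h0" unfolding h0_def by (rule sm_hp)

definition bump :: "real \<Rightarrow> real \<Rightarrow> real \<Rightarrow> real" where
  "bump p q x = h0 ((x-p)/(q-p)) * h0 ((q-x)/(q-p))"

lemma sm_bump: "sm (bump p q)"
proof -
  have e: "bump p q = (\<lambda>x. h0 ((1/(q-p))*x + (-p/(q-p))) * h0 ((-1/(q-p))*x + q/(q-p)))"
    unfolding bump_def by (intro ext) (simp add: diff_divide_distrib add_divide_distrib)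
  show ?thesis unfolding e by (intro sm_mult sm_affine sm_h0)
qed

lemma bump_nonneg: "0 \<le> bump p q x"
  unfolding bump_def h0_alt by auto

lemma bump_pos: "p < x \<Longrightarrow> x < q \<Longrightarrow> 0 < bump p q x"
  unfolding bump_def h0_alt by auto

lemma bump_zero: "p < q \<Longrightarrow> x \<notin> {p<..<q} \<Longrightarrow> bump p q x = 0"
  unfolding bump_def h0_alt by (auto simp: field_simps)

lemma sm_cont: "sm f \<Longrightarrow> continuous_on S f"
  by (meson continuous_at_imp_continuous_on differentiable_imp_continuous_within sm_differentiable)



lemma int_deriv_interior:
  fixes f :: "real \<Rightarrow> real"
  assumes "continuous_on {L..R} f" "L < x" "x < R"
  shows "DERIV (\<lambda>u. integral {L..u} f) x :> f x"
proof -
  have "((\<lambda>u. integral {L..u} f) has_real_derivative f x) (at x within {L..R})"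
    using integral_has_real_derivative[OF assms(1)] assms by auto
  moreover have "x \<in> interior {L..R}" using assms by auto
  ultimately show ?thesis using at_within_interior by metis
qed

lemma prim:
  fixes f :: "real \<Rightarrow> real"
  assumes "continuous_on UNIV f" "L < P" "\<And>t. t < P \<Longrightarrow> f t = 0"
  shows "\<And>x. x < P \<Longrightarrow> integral {L..x} f = 0"
    and "\<And>x. DERIV (\<lambda>u. integral {L..u} f) x :> f x"
proof -
  show z: "integral {L..x} f = 0" if "x < P" for x
  proof (cases "L \<le> x")
    case True
    have "(f has_integral 0) {L..x}" by (rule has_integral_is_0) (use that assms(3) in auto)
    thus ?thesis by (simp add: integral_unique)
  next
    case False thus ?thesis by simp
  qed
  fix x
  show "DERIV (\<lambda>u. integral {L..u} f) x :> f x"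
  proof (cases "L < x")
    case True
    show ?thesis by (rule int_deriv_interior[of L "x+1"]) (use True assms(1) continuous_on_subset in auto)
  next
    case False
    hence xP: "x < P" using assms by simp
    have "DERIV (\<lambda>u. 0) x :> f x" using assms(3)[OF xP] by simp
    thus ?thesis
      by (rule has_field_derivative_transform_within_open[where S="{..<P}"]) (use xP z in auto)
  qed
qed

lemma tail:
  fixes f :: "real \<Rightarrow> real"
  assumes "continuous_on UNIV f" "\<And>t. Q \<le> t \<Longrightarrow> f t = 0" "L \<le> Q" "Q \<le> x"
  shows "integral {L..x} f = integral {L..Q} f"
proof -
  have "integral {L..Q} f + integral {Q..x} f = integral {L..x} f"
    using Henstock_Kurzweil_Integration.integral_combine[of L Q x f] assms continuous_on_subset[OF assms(1)]
    by (auto intro: integrable_continuous_real)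
  moreover have "integral {Q..x} f = 0"
    using has_integral_is_0[of "{Q..x}" f] assms(2) by (auto simp: integral_unique)
  ultimately show ?thesis by simp
qed

lemma supp_int:
  fixes f :: "real \<Rightarrow> real"
  assumes "f integrable_on {P..Q}" "\<And>x. x \<notin> {P..Q} \<Longrightarrow> f x = 0" "{P..Q} \<subseteq> {s..t}"
  shows "integral {s..t} f = integral {P..Q} f"
  using has_integral_on_superset[OF integrable_integral[OF assms(1)] assms(2,3)]
  by (simp add: integral_unique)

lemma int_pos:
  fixes f :: "real \<Rightarrow> real"
  assumes "continuous_on {s..t} f" "\<And>x. x \<in> {s..t} \<Longrightarrow> 0 \<le> f x" "x0 \<in> {s..t}" "0 < f x0" "s < t"
  shows "0 < integral {s..t} f"
proof -
  have i: "f integrable_on {s..t}" using assms(1) integrable_continuous_real by blast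
  have "0 \<le> integral {s..t} f" using assms(2) i by (intro integral_nonneg) auto
  moreover have "integral {s..t} f \<noteq> 0"
  proof
    assume "integral {s..t} f = 0"
    hence "(f has_integral 0) (cbox s t)" using i by (metis box_real(2) integrable_integral)
    from has_integral_0_cbox_imp_0[OF _ _ this, of x0] assms show False by auto
  qed
  ultimately show ?thesis by simp
qed

lemma deriv_zero_outside:
  fixes f :: "real \<Rightarrow> real"
  assumes "closed S" "\<And>x. x \<notin> S \<Longrightarrow> f x = 0" "x \<notin> S"
  shows "deriv f x = 0"
proof -
  have "DERIV (\<lambda>u. 0) x :> 0" by simp
  hence "DERIV f x :> 0"
    by (rule has_field_derivative_transform_within_open[where S="-S"]) (use assms in auto)
  thus ?thesis by (rule DERIV_imp_deriv)
qed

lemma ftc_real: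
  fixes f :: "real \<Rightarrow> real"
  assumes "a \<le> b" "\<And>x. x \<in> {a..b} \<Longrightarrow> DERIV f x :> f' x"
  shows "(f' has_integral (f b - f a)) {a..b}"
  by (rule fundamental_theorem_of_calculus[OF assms(1)])
     (use assms(2) in \<open>auto simp: has_real_derivative_iff_has_vector_derivative[symmetric] intro: has_field_derivative_at_within\<close>)

definition gf :: "real \<Rightarrow> real \<Rightarrow> real" where
  "gf c x = (if c = 0 then x else (1 - exp (-c*x))/c)"

lemma gf_DERIV: "DERIV (gf c) x :> exp (-c*x)"
proof (cases "c = 0")
  case True thus ?thesis unfolding gf_def by (auto intro!: derivative_eq_intros)
next
  case False
  have "DERIV (\<lambda>x. (1 - exp (-c*x))/c) x :> exp (-c*x)"
    using False by (auto intro!: derivative_eq_intros)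
  thus ?thesis unfolding gf_def using False by simp
qed

lemma gf_strict: "x < y \<Longrightarrow> gf c x < gf c y"
  by (rule DERIV_pos_imp_increasing[of x y "gf c"]) (use gf_DERIV in \<open>auto intro!: exI[of _ "exp (-c*_)"]\<close>)

lemma gf_mono: "x \<le> y \<Longrightarrow> gf c x \<le> gf c y"
  using gf_strict by (cases "x = y") (auto simp: less_imp_le)

lemma gf_cont: "continuous_on S (gf c)"
  using gf_DERIV by (meson DERIV_continuous continuous_at_imp_continuous_on)



lemma H1:
  fixes u \<psi> :: "real \<Rightarrow> real"
  assumes ab: "-a \<le> \<alpha>" "\<beta> \<le> a"
    and u: "continuous_on {\<alpha>..\<beta>} u"
    and hyp: "\<And>\<phi> P Q. \<alpha> < P \<Longrightarrow> P < Q \<Longrightarrow> Q < \<beta> \<Longrightarrow> test_fun a \<phi> \<Longrightarrow> (\<forall>x. x \<notin> {P..Q} \<longrightarrow> \<phi> x = 0)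
       \<Longrightarrow> integral {-a..a} (\<lambda>x. c*u x*deriv \<phi> x - u x*deriv (deriv \<phi>) x) = 0"
    and PQ: "\<alpha> < P" "P < Q" "Q < \<beta>"
    and psm: "sm \<psi>" and psupp: "\<And>x. x \<notin> {P<..<Q} \<Longrightarrow> \<psi> x = 0"
    and J0: "integral {\<alpha>..\<beta>} \<psi> = 0" and J1: "integral {\<alpha>..\<beta>} (\<lambda>x. gf c x * \<psi> x) = 0"
  shows "integral {\<alpha>..\<beta>} (\<lambda>x. u x * \<psi> x) = 0"
proof -
  have pc: "continuous_on UNIV \<psi>" using psm sm_cont by blast
  have plt: "\<And>t. t < P \<Longrightarrow> \<psi> t = 0" and pge: "\<And>t. Q \<le> t \<Longrightarrow> \<psi> t = 0" using psupp by auto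
  define \<Psi> where "\<Psi> x = integral {\<alpha>..x} \<psi>" for x
  have \<Psi>z: "\<And>x. x < P \<Longrightarrow> \<Psi> x = 0" and \<Psi>D: "\<And>x. DERIV \<Psi> x :> \<psi> x"
    using prim[OF pc PQ(1) plt] unfolding \<Psi>_def by auto
  have \<Psi>Q: "\<Psi> x = 0" if "Q \<le> x" for x
  proof -
    have "\<Psi> x = integral {\<alpha>..Q} \<psi>" unfolding \<Psi>_def by (rule tail[OF pc pge]) (use PQ that in auto)
    also have "\<dots> = integral {\<alpha>..\<beta>} \<psi>" by (rule tail[OF pc pge, symmetric]) (use PQ in auto)
    finally show ?thesis using J0 by simp
  qed
  have \<Psi>c: "continuous_on UNIV \<Psi>" using \<Psi>D by (meson DERIV_continuous continuous_at_imp_continuous_on)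
  define f2 where "f2 t = exp (-c*t) * \<Psi> t" for t
  have f2c: "continuous_on UNIV f2" unfolding f2_def by (intro continuous_intros \<Psi>c)
  have f2z: "\<And>t. t < P \<Longrightarrow> f2 t = 0" "\<And>t. Q \<le> t \<Longrightarrow> f2 t = 0" unfolding f2_def using \<Psi>z \<Psi>Q by auto
  define I where "I x = integral {\<alpha>..x} f2" for x
  have Iz: "\<And>x. x < P \<Longrightarrow> I x = 0" and ID: "\<And>x. DERIV I x :> f2 x"
    using prim[OF f2c PQ(1) f2z(1)] unfolding I_def by auto
  define g\<psi> where "g\<psi> t = gf c t * \<psi> t" for t
  have g\<psi>c: "continuous_on UNIV g\<psi>" unfolding g\<psi>_def by (intro continuous_intros gf_cont pc)
  have IQ: "I Q = 0"
  proof -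
    have "((\<lambda>t. f2 t + g\<psi> t) has_integral (gf c Q * \<Psi> Q - gf c \<alpha> * \<Psi> \<alpha>)) {\<alpha>..Q}"
    proof (rule ftc_real)
      fix x
      have "DERIV (\<lambda>t. gf c t * \<Psi> t) x :> exp (-c*x) * \<Psi> x + \<psi> x * gf c x"
        by (rule DERIV_mult[OF gf_DERIV \<Psi>D])
      thus "DERIV (\<lambda>t. gf c t * \<Psi> t) x :> f2 x + g\<psi> x" unfolding f2_def g\<psi>_def by (simp add: mult.commute)
    qed (use PQ in auto)
    moreover have "\<Psi> Q = 0" "\<Psi> \<alpha> = 0" using \<Psi>Q \<Psi>z PQ by auto
    ultimately have "integral {\<alpha>..Q} (\<lambda>t. f2 t + g\<psi> t) = 0" by (simp add: integral_unique)
    moreover have "integral {\<alpha>..Q} (\<lambda>t. f2 t + g\<psi> t) = integral {\<alpha>..Q} f2 + integral {\<alpha>..Q} g\<psi>"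
      by (intro integral_add integrable_continuous_real continuous_on_subset[OF f2c] continuous_on_subset[OF g\<psi>c]) auto
    moreover have "integral {\<alpha>..Q} g\<psi> = integral {\<alpha>..\<beta>} g\<psi>"
      by (rule tail[OF g\<psi>c, symmetric]) (use PQ pge in \<open>auto simp: g\<psi>_def\<close>)
    ultimately show ?thesis using J1 unfolding I_def g\<psi>_def by simp
  qed
  have Iq: "\<And>x. Q \<le> x \<Longrightarrow> I x = 0"
    using IQ tail[OF f2c f2z(2)] PQ unfolding I_def by (metis less_imp_le order.strict_trans)
  define \<phi> where "\<phi> x = -(exp (c*x) * I x)" for x
  have \<phi>D: "DERIV \<phi> x :> c * \<phi> x + (- \<Psi> x)" for x
  proof -
    have "DERIV \<phi> x :> -(c * exp (c*x) * I x + exp (c*x) * f2 x)"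
      unfolding \<phi>_def by (auto intro!: derivative_eq_intros ID)
    moreover have "exp (c*x) * f2 x = \<Psi> x" unfolding f2_def by (simp add: exp_minus field_simps)
    ultimately show ?thesis unfolding \<phi>_def by (simp add: algebra_simps)
  qed
  have sm\<Psi>: "sm \<Psi>" by (rule sm_ode[of \<Psi> 0 \<psi>]) (use \<Psi>D psm in auto)
  have "sm (\<lambda>x. - \<Psi> x)" using sm_cmult[OF sm\<Psi>, of "-1"] by simp
  hence sm\<phi>: "sm \<phi>" using sm_ode[OF \<phi>D] by blast
  have d\<phi>: "deriv \<phi> = (\<lambda>x. c * \<phi> x - \<Psi> x)" using \<phi>D by (intro ext DERIV_imp_deriv) simp
  have "DERIV (\<lambda>x. c * \<phi> x - \<Psi> x) x :> c * (c * \<phi> x - \<Psi> x) - \<psi> x" for x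
    using \<phi>D[of x] \<Psi>D[of x] by (auto intro!: derivative_eq_intros)
  hence dd\<phi>: "deriv (deriv \<phi>) = (\<lambda>x. c * (c * \<phi> x - \<Psi> x) - \<psi> x)"
    unfolding d\<phi> by (intro ext DERIV_imp_deriv) simp
  have \<phi>z: "\<forall>x. x \<notin> {P..Q} \<longrightarrow> \<phi> x = 0" unfolding \<phi>_def using Iz Iq by auto
  have tf: "test_fun a \<phi>"
    unfolding test_fun_def
  proof
    show "\<forall>n x. (deriv ^^ n) \<phi> differentiable at x" using sm\<phi> unfolding sm_def .
    define \<epsilon> where "\<epsilon> = min (a - Q) (a + P) / 2"
    have "\<epsilon> > 0" unfolding \<epsilon>_def using PQ ab by auto
    moreover have "\<forall>x. a - \<epsilon> \<le> \<bar>x\<bar> \<longrightarrow> \<phi> x = 0"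
    proof (intro allI impI)
      fix x assume "a - \<epsilon> \<le> \<bar>x\<bar>"
      moreover have "\<epsilon> \<le> (a - Q)/2" "\<epsilon> \<le> (a + P)/2" unfolding \<epsilon>_def by auto
      ultimately have "x \<notin> {P..Q}" using PQ ab by (cases "x < 0") auto
      thus "\<phi> x = 0" using \<phi>z by auto
    qed
    ultimately show "\<exists>\<epsilon>>0. \<forall>x. a - \<epsilon> \<le> \<bar>x\<bar> \<longrightarrow> \<phi> x = 0" by blast
  qed
  have "integral {-a..a} (\<lambda>x. c*u x*deriv \<phi> x - u x*deriv (deriv \<phi>) x) = 0"
    by (rule hyp[OF PQ tf \<phi>z])
  moreover have "(\<lambda>x. c*u x*deriv \<phi> x - u x*deriv (deriv \<phi>) x) = (\<lambda>x. u x * \<psi> x)"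
    unfolding dd\<phi> unfolding d\<phi> by (intro ext) (simp add: algebra_simps)
  ultimately have "integral {-a..a} (\<lambda>x. u x * \<psi> x) = 0" by simp
  moreover have "integral {-a..a} (\<lambda>x. u x * \<psi> x) = integral {\<alpha>..\<beta>} (\<lambda>x. u x * \<psi> x)"
    by (rule supp_int) (use psupp PQ ab in \<open>auto intro!: integrable_continuous_real continuous_intros u continuous_on_subset[OF pc]\<close>)
  ultimately show ?thesis by simp
qed



lemma bump_cont: "continuous_on S (bump p q)"
  using sm_bump sm_cont by blast

lemma pointwise:
  fixes v :: "real \<Rightarrow> real"
  assumes vc: "continuous_on {\<alpha>..\<beta>} v"
    and hz: "\<And>p q. \<alpha> < p \<Longrightarrow> p < q \<Longrightarrow> q < \<beta> \<Longrightarrow> integral {\<alpha>..\<beta>} (\<lambda>x. v x * bump p q x) = 0"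
    and x0: "x0 \<in> {\<alpha><..<\<beta>}"
  shows "v x0 \<le> 0"
proof (rule ccontr)
  assume "\<not> v x0 \<le> 0"
  hence pos: "v x0 > 0" by simp
  have "isCont v x0" using continuous_on_interior[OF vc] x0 by auto
  hence "v \<midarrow>x0\<rightarrow> v x0" by (simp add: isCont_def)
  from LIM_fun_gt_zero[OF this pos] obtain r where r: "0 < r" "\<And>x. x \<noteq> x0 \<and> \<bar>x0 - x\<bar> < r \<longrightarrow> 0 < v x"
    by blast
  have rr: "\<bar>x0 - x\<bar> < r \<Longrightarrow> 0 < v x" for x using r pos by (cases "x = x0") auto
  define \<delta> where "\<delta> = min r (min (x0-\<alpha>) (\<beta>-x0)) / 2"
  have "\<delta> \<le> r/2" "\<delta> \<le> (x0-\<alpha>)/2" "\<delta> \<le> (\<beta>-x0)/2" "0 < \<delta>" unfolding \<delta>_def using r x0 by auto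
  hence \<delta>: "0 < \<delta>" "\<delta> < r" "\<alpha> < x0 - \<delta>" "x0 + \<delta> < \<beta>" using r x0 by auto
  have "0 < integral {\<alpha>..\<beta>} (\<lambda>x. v x * bump (x0-\<delta>) (x0+\<delta>) x)"
  proof (rule int_pos)
    show "continuous_on {\<alpha>..\<beta>} (\<lambda>x. v x * bump (x0-\<delta>) (x0+\<delta>) x)"
      by (intro continuous_intros vc bump_cont)
    show "0 \<le> v x * bump (x0-\<delta>) (x0+\<delta>) x" if "x \<in> {\<alpha>..\<beta>}" for x
    proof (cases "x \<in> {x0-\<delta><..<x0+\<delta>}")
      case True
      hence "0 < v x" using rr \<delta> by auto
      thus ?thesis using bump_nonneg by simp
    next
      case False thus ?thesis using bump_zero[of "x0-\<delta>" "x0+\<delta>" x] \<delta> by simp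
    qed
    show "x0 \<in> {\<alpha>..\<beta>}" using x0 by simp
    show "0 < v x0 * bump (x0-\<delta>) (x0+\<delta>) x0" using pos bump_pos[of "x0-\<delta>" x0 "x0+\<delta>"] \<delta> by simp
    show "\<alpha> < \<beta>" using x0 by simp
  qed
  moreover have "integral {\<alpha>..\<beta>} (\<lambda>x. v x * bump (x0-\<delta>) (x0+\<delta>) x) = 0"
    using hz \<delta> by simp
  ultimately show False by simp
qed

lemma int_lin3:
  fixes f g h :: "real \<Rightarrow> real"
  assumes "f integrable_on S" "g integrable_on S" "h integrable_on S"
  shows "integral S (\<lambda>x. f x - a1 * g x - a2 * h x) = integral S f - a1 * integral S g - a2 * integral S h"
proof -
  have "integral S (\<lambda>x. f x - a1 * g x - a2 * h x) = integral S (\<lambda>x. f x - a1 * g x) - integral S (\<lambda>x. a2 * h x)"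
    using assms by (intro integral_diff integrable_diff integrable_cmul) (auto intro: integrable_on_mult_right)
  also have "\<dots> = integral S f - integral S (\<lambda>x. a1 * g x) - integral S (\<lambda>x. a2 * h x)"
    using assms by (subst integral_diff) (auto intro: integrable_on_mult_right)
  finally show ?thesis by simp
qed

lemma Hlem:
  fixes u :: "real \<Rightarrow> real"
  assumes ab: "\<alpha> < \<beta>" "-a \<le> \<alpha>" "\<beta> \<le> a"
    and u: "continuous_on {\<alpha>..\<beta>} u"
    and hyp: "\<And>\<phi> P Q. \<alpha> < P \<Longrightarrow> P < Q \<Longrightarrow> Q < \<beta> \<Longrightarrow> test_fun a \<phi> \<Longrightarrow> (\<forall>x. x \<notin> {P..Q} \<longrightarrow> \<phi> x = 0)
       \<Longrightarrow> integral {-a..a} (\<lambda>x. c*u x*deriv \<phi> x - u x*deriv (deriv \<phi>) x) = 0"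
  shows "\<exists>A B. \<forall>x\<in>{\<alpha><..<\<beta>}. u x = A + B * gf c x"
proof -
  define J where "J f = integral {\<alpha>..\<beta>} f" for f :: "real \<Rightarrow> real"
  have Jint: "f integrable_on {\<alpha>..\<beta>}" if "continuous_on {\<alpha>..\<beta>} f" for f :: "real \<Rightarrow> real"
    using that integrable_continuous_real by blast
  define d where "d = \<beta> - \<alpha>"
  have d: "d > 0" unfolding d_def using ab by simp
  define p1 where "p1 = \<alpha> + d/5"
  define q1 where "q1 = \<alpha> + 2*d/5"
  define p2 where "p2 = \<alpha> + 3*d/5"
  define q2 where "q2 = \<alpha> + 4*d/5"
  have pq: "\<alpha> < p1" "p1 < q1" "q1 < p2" "p2 < q2" "q2 < \<beta>"
    unfolding p1_def q1_def p2_def q2_def using d unfolding d_def by (simp_all add: field_simps)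
  define \<psi>1 where "\<psi>1 = bump p1 q1"
  define \<psi>2 where "\<psi>2 = bump p2 q2"
  define s1 where "s1 = J \<psi>1"
  define s2 where "s2 = J \<psi>2"
  define t1 where "t1 = J (\<lambda>x. gf c x * \<psi>1 x)"
  define t2 where "t2 = J (\<lambda>x. gf c x * \<psi>2 x)"
  define U1 where "U1 = J (\<lambda>x. u x * \<psi>1 x)"
  define U2 where "U2 = J (\<lambda>x. u x * \<psi>2 x)"
  have bpos: "0 < J (bump p q)" if "\<alpha> < p" "p < q" "q < \<beta>" for p q
    unfolding J_def
    by (rule int_pos[of _ _ _ "(p+q)/2"]) (use that bump_nonneg bump_pos[of p "(p+q)/2" q] in \<open>auto intro: bump_cont\<close>)
  have s1: "s1 > 0" unfolding s1_def \<psi>1_def using bpos pq by auto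
  have s2: "s2 > 0" unfolding s2_def \<psi>2_def using bpos pq by auto
  have t1: "t1 \<le> gf c q1 * s1"
  proof -
    have "J (\<lambda>x. gf c x * \<psi>1 x) \<le> J (\<lambda>x. gf c q1 * \<psi>1 x)" unfolding J_def
    proof (rule integral_le)
      show "(\<lambda>x. gf c x * \<psi>1 x) integrable_on {\<alpha>..\<beta>}" "(\<lambda>x. gf c q1 * \<psi>1 x) integrable_on {\<alpha>..\<beta>}"
        unfolding \<psi>1_def by (auto intro!: Jint continuous_intros gf_cont bump_cont)
      fix x show "gf c x * \<psi>1 x \<le> gf c q1 * \<psi>1 x"
      proof (cases "x \<le> q1")
        case True thus ?thesis using gf_mono[OF True] bump_nonneg unfolding \<psi>1_def by (simp add: mult_right_mono)
      next
        case False thus ?thesis using bump_zero[of p1 q1 x] pq unfolding \<psi>1_def by simp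
      qed
    qed
    moreover have "J (\<lambda>x. gf c q1 * \<psi>1 x) = gf c q1 * s1" unfolding J_def s1_def by simp
    ultimately show ?thesis unfolding t1_def by simp
  qed
  have t2: "gf c p2 * s2 \<le> t2"
  proof -
    have "J (\<lambda>x. gf c p2 * \<psi>2 x) \<le> J (\<lambda>x. gf c x * \<psi>2 x)" unfolding J_def
    proof (rule integral_le)
      show "(\<lambda>x. gf c x * \<psi>2 x) integrable_on {\<alpha>..\<beta>}" "(\<lambda>x. gf c p2 * \<psi>2 x) integrable_on {\<alpha>..\<beta>}"
        unfolding \<psi>2_def by (auto intro!: Jint continuous_intros gf_cont bump_cont)
      fix x show "gf c p2 * \<psi>2 x \<le> gf c x * \<psi>2 x"
      proof (cases "p2 \<le> x")
        case True thus ?thesis using gf_mono[OF True] bump_nonneg unfolding \<psi>2_def by (simp add: mult_right_mono)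
      next
        case False thus ?thesis using bump_zero[of p2 q2 x] pq unfolding \<psi>2_def by simp
      qed
    qed
    moreover have "J (\<lambda>x. gf c p2 * \<psi>2 x) = gf c p2 * s2" unfolding J_def s2_def by simp
    ultimately show ?thesis unfolding t2_def by simp
  qed
  define D where "D = s1 * t2 - s2 * t1"
  have D: "D > 0"
  proof -
    have "s1 * (gf c p2 * s2) \<le> s1 * t2" using t2 s1 by (simp add: mult_left_mono)
    moreover have "s2 * t1 \<le> s2 * (gf c q1 * s1)" using t1 s2 by (simp add: mult_left_mono)
    moreover have "s1 * s2 * (gf c p2 - gf c q1) > 0" using gf_strict[OF pq(3)] s1 s2 by simp
    ultimately show ?thesis unfolding D_def by (simp add: algebra_simps)
  qed
  define A where "A = (U1 * t2 - U2 * t1) / D"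
  define B where "B = (s1 * U2 - s2 * U1) / D"
  have AD: "A * D = U1 * t2 - U2 * t1" unfolding A_def using D by simp
  have BD: "B * D = s1 * U2 - s2 * U1" unfolding B_def using D by simp
  have "(A * s1 + B * t1) * D = U1 * D"
  proof -
    have "(A * s1 + B * t1) * D = s1 * (A * D) + t1 * (B * D)" by (simp add: algebra_simps)
    also have "\<dots> = U1 * D" unfolding AD BD unfolding D_def by (simp add: algebra_simps)
    finally show ?thesis .
  qed
  hence AB1: "A * s1 + B * t1 = U1" using D by simp
  have "(A * s2 + B * t2) * D = U2 * D"
  proof -
    have "(A * s2 + B * t2) * D = s2 * (A * D) + t2 * (B * D)" by (simp add: algebra_simps)
    also have "\<dots> = U2 * D" unfolding AD BD unfolding D_def by (simp add: algebra_simps)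
    finally show ?thesis .
  qed
  hence AB2: "A * s2 + B * t2 = U2" using D by simp
  define v where "v x = u x - (A + B * gf c x)" for x
  have vc: "continuous_on {\<alpha>..\<beta>} v" unfolding v_def by (intro continuous_intros u gf_cont)
  have key: "integral {\<alpha>..\<beta>} (\<lambda>x. v x * bump p q x) = 0" if pq0: "\<alpha> < p" "p < q" "q < \<beta>" for p q
  proof -
    define \<psi> where "\<psi> = bump p q"
    define s where "s = J \<psi>"
    define t where "t = J (\<lambda>x. gf c x * \<psi> x)"
    define a1 where "a1 = (s * t2 - s2 * t) / D"
    define a2 where "a2 = (s1 * t - s * t1) / D"
    have a1D: "a1 * D = s * t2 - s2 * t" unfolding a1_def using D by simp
    have a2D: "a2 * D = s1 * t - s * t1" unfolding a2_def using D by simp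
    have "(a1 * s1 + a2 * s2) * D = s * D"
    proof -
      have "(a1 * s1 + a2 * s2) * D = s1 * (a1 * D) + s2 * (a2 * D)" by (simp add: algebra_simps)
      also have "\<dots> = s * D" unfolding a1D a2D unfolding D_def by (simp add: algebra_simps)
      finally show ?thesis .
    qed
    hence a1: "a1 * s1 + a2 * s2 = s" using D by simp
    have "(a1 * t1 + a2 * t2) * D = t * D"
    proof -
      have "(a1 * t1 + a2 * t2) * D = t1 * (a1 * D) + t2 * (a2 * D)" by (simp add: algebra_simps)
      also have "\<dots> = t * D" unfolding a1D a2D unfolding D_def by (simp add: algebra_simps)
      finally show ?thesis .
    qed
    hence a2: "a1 * t1 + a2 * t2 = t" using D by simp
    define \<psi>t where "\<psi>t x = \<psi> x - a1 * \<psi>1 x - a2 * \<psi>2 x" for x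
    have smt: "sm \<psi>t" unfolding \<psi>t_def \<psi>_def \<psi>1_def \<psi>2_def
      by (intro sm_diff sm_cmult sm_bump)
    define P where "P = min p p1"
    define Q where "Q = max q q2"
    have PQ: "\<alpha> < P" "P < Q" "Q < \<beta>" unfolding P_def Q_def using pq pq0 by auto
    have supp: "\<psi>t x = 0" if "x \<notin> {P<..<Q}" for x
    proof -
      have "\<psi> x = 0" unfolding \<psi>_def by (rule bump_zero) (use that pq0 in \<open>auto simp: P_def Q_def\<close>)
      moreover have "\<psi>1 x = 0" unfolding \<psi>1_def by (rule bump_zero) (use that pq in \<open>auto simp: P_def Q_def\<close>)
      moreover have "\<psi>2 x = 0" unfolding \<psi>2_def by (rule bump_zero) (use that pq in \<open>auto simp: P_def Q_def\<close>)
      ultimately show ?thesis unfolding \<psi>t_def by simp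
    qed
    have ci: "(\<lambda>x. f x * bump p' q' x) integrable_on {\<alpha>..\<beta>}" if "continuous_on {\<alpha>..\<beta>} f" for f p' q'
      by (intro Jint continuous_intros that bump_cont)
    have ci0: "bump p' q' integrable_on {\<alpha>..\<beta>}" for p' q' by (intro Jint bump_cont)
    have gc: "continuous_on {\<alpha>..\<beta>} (gf c)" by (rule gf_cont)
    have J0: "J \<psi>t = 0"
    proof -
      have "J \<psi>t = s - a1 * s1 - a2 * s2" unfolding J_def \<psi>t_def s_def s1_def s2_def J_def \<psi>_def \<psi>1_def \<psi>2_def
        by (rule int_lin3) (auto intro: ci0)
      thus ?thesis using a1 by simp
    qed
    have J1: "J (\<lambda>x. gf c x * \<psi>t x) = 0"
    proof -
      have e: "(\<lambda>x. gf c x * \<psi>t x) = (\<lambda>x. gf c x * \<psi> x - a1 * (gf c x * \<psi>1 x) - a2 * (gf c x * \<psi>2 x))"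
        unfolding \<psi>t_def by (simp add: algebra_simps)
      have "J (\<lambda>x. gf c x * \<psi>t x) = t - a1 * t1 - a2 * t2" unfolding e J_def t_def t1_def t2_def J_def \<psi>_def \<psi>1_def \<psi>2_def
        by (rule int_lin3) (auto intro: ci gc)
      thus ?thesis using a2 by simp
    qed
    have "J (\<lambda>x. u x * \<psi>t x) = 0" unfolding J_def
      by (rule H1[OF ab(2,3) u hyp PQ smt supp]) (use J0 J1 in \<open>auto simp: J_def\<close>)
    moreover have "J (\<lambda>x. u x * \<psi>t x) = J (\<lambda>x. u x * \<psi> x) - a1 * U1 - a2 * U2"
    proof -
      have e: "(\<lambda>x. u x * \<psi>t x) = (\<lambda>x. u x * \<psi> x - a1 * (u x * \<psi>1 x) - a2 * (u x * \<psi>2 x))"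
        unfolding \<psi>t_def by (simp add: algebra_simps)
      show ?thesis unfolding e J_def U1_def U2_def J_def \<psi>_def \<psi>1_def \<psi>2_def
        by (rule int_lin3) (auto intro: ci u)
    qed
    ultimately have Ju: "J (\<lambda>x. u x * \<psi> x) = a1 * U1 + a2 * U2" by simp
    have e: "(\<lambda>x. v x * \<psi> x) = (\<lambda>x. u x * \<psi> x - A * \<psi> x - B * (gf c x * \<psi> x))"
      unfolding v_def by (simp add: algebra_simps)
    have "J (\<lambda>x. v x * \<psi> x) = J (\<lambda>x. u x * \<psi> x) - A * s - B * t"
      unfolding e unfolding J_def s_def t_def J_def \<psi>_def
      by (rule int_lin3) (auto intro: ci ci0 u gc)
    also have "\<dots> = a1 * (A * s1 + B * t1) + a2 * (A * s2 + B * t2) - A * s - B * t"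
      unfolding Ju AB1 AB2 ..
    also have "\<dots> = A * (a1 * s1 + a2 * s2) + B * (a1 * t1 + a2 * t2) - A * s - B * t"
      by (simp add: algebra_simps)
    also have "\<dots> = 0" unfolding a1 a2 by simp
    finally show ?thesis unfolding J_def \<psi>_def .
  qed
  have "v x \<le> 0" if "x \<in> {\<alpha><..<\<beta>}" for x by (rule pointwise[OF vc key that])
  moreover have "-v x \<le> 0" if "x \<in> {\<alpha><..<\<beta>}" for x
  proof (rule pointwise[where v="\<lambda>x. - v x", OF _ _ that])
    show "continuous_on {\<alpha>..\<beta>} (\<lambda>x. - v x)" by (intro continuous_intros vc)
    fix p q assume "\<alpha> < p" "p < q" "q < \<beta>"
    thus "integral {\<alpha>..\<beta>} (\<lambda>x. - v x * bump p q x) = 0" using key by simp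
  qed
  ultimately have "\<forall>x\<in>{\<alpha><..<\<beta>}. v x = 0" by (meson neg_le_0_iff_le order_antisym)
  thus ?thesis unfolding v_def by (intro exI[of _ A] exI[of _ B]) auto
qed



lemma closure_eq:
  fixes f g :: "real \<Rightarrow> real"
  assumes "\<alpha> < \<beta>" "continuous_on {\<alpha>..\<beta>} f" "continuous_on {\<alpha>..\<beta>} g" "\<And>x. x \<in> {\<alpha><..<\<beta>} \<Longrightarrow> f x = g x"
    "x \<in> {\<alpha>..\<beta>}"
  shows "f x = g x"
proof -
  have c1: "closed {x \<in> {\<alpha>..\<beta>}. f x \<le> g x}" by (rule continuous_on_closed_Collect_le) (use assms in auto)
  have c2: "closed {x \<in> {\<alpha>..\<beta>}. g x \<le> f x}" by (rule continuous_on_closed_Collect_le) (use assms in auto)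
  have "closure {\<alpha><..<\<beta>} \<subseteq> {x \<in> {\<alpha>..\<beta>}. f x \<le> g x}" by (rule closure_minimal[OF _ c1]) (use assms in auto)
  moreover have "closure {\<alpha><..<\<beta>} \<subseteq> {x \<in> {\<alpha>..\<beta>}. g x \<le> f x}" by (rule closure_minimal[OF _ c2]) (use assms in auto)
  ultimately show ?thesis using assms(1,5) by force
qed

lemma nonneg_step:
  fixes u F :: "real \<Rightarrow> real"
  assumes a: "0 < a" and uc: "continuous_on {-a..a} u" and um: "0 < u (-a)" "u a = 0"
    and F0: "\<And>x. x \<in> {-a..a} \<Longrightarrow> u x < 0 \<Longrightarrow> F x = 0"
    and ws: "weak_sol a c u F"
  shows "\<forall>x\<in>{-a..a}. 0 \<le> u x"
proof (rule ccontr)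
  assume "\<not> (\<forall>x\<in>{-a..a}. 0 \<le> u x)"
  then obtain x0 where x0: "x0 \<in> {-a..a}" "u x0 < 0" by force
  define S1 where "S1 = {t \<in> {-a..x0}. (\<lambda>_. 0) t \<le> u t}"
  define S2 where "S2 = {t \<in> {x0..a}. (\<lambda>_. 0) t \<le> u t}"
  have cS1: "closed S1" unfolding S1_def
    by (rule continuous_on_closed_Collect_le) (use x0 in \<open>auto intro: continuous_on_subset[OF uc]\<close>)
  have cS2: "closed S2" unfolding S2_def
    by (rule continuous_on_closed_Collect_le) (use x0 in \<open>auto intro: continuous_on_subset[OF uc]\<close>)
  have ne1: "-a \<in> S1" unfolding S1_def using x0 um by auto
  have ne2: "a \<in> S2" unfolding S2_def using x0 um by auto
  define \<alpha> where "\<alpha> = Sup S1"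
  define \<beta> where "\<beta> = Inf S2"
  have bd1: "bdd_above S1" unfolding S1_def by (auto intro: bdd_aboveI[of _ x0])
  have bd2: "bdd_below S2" unfolding S2_def by (auto intro: bdd_belowI[of _ x0])
  have \<alpha>S: "\<alpha> \<in> S1" unfolding \<alpha>_def using closed_contains_Sup[OF _ bd1 cS1] ne1 by blast
  have \<beta>S: "\<beta> \<in> S2" unfolding \<beta>_def using closed_contains_Inf[OF _ bd2 cS2] ne2 by blast
  have \<alpha>1: "-a \<le> \<alpha>" "\<alpha> \<le> x0" "0 \<le> u \<alpha>" using \<alpha>S unfolding S1_def by auto
  have \<beta>1: "\<beta> \<le> a" "x0 \<le> \<beta>" "0 \<le> u \<beta>" using \<beta>S unfolding S2_def by auto
  have ax: "\<alpha> < x0" using \<alpha>1 x0 by (cases "\<alpha> = x0") auto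
  have xb: "x0 < \<beta>" using \<beta>1 x0 by (cases "\<beta> = x0") auto
  have neg: "u t < 0" if "t \<in> {\<alpha><..<\<beta>}" for t
  proof (rule ccontr)
    assume "\<not> u t < 0"
    show False
    proof (cases "t \<le> x0")
      case True
      hence "t \<in> S1" unfolding S1_def using that \<alpha>1 \<open>\<not> u t < 0\<close> by auto
      hence "t \<le> \<alpha>" unfolding \<alpha>_def using bd1 by (rule cSup_upper)
      thus False using that by simp
    next
      case False
      hence "t \<in> S2" unfolding S2_def using that \<beta>1 \<open>\<not> u t < 0\<close> by auto
      hence "\<beta> \<le> t" unfolding \<beta>_def using bd2 by (rule cInf_lower)
      thus False using that by simp
    qed
  qed
  have ab: "\<alpha> < \<beta>" using ax xb by simp
  have uc': "continuous_on {\<alpha>..\<beta>} u" by (rule continuous_on_subset[OF uc]) (use \<alpha>1 \<beta>1 in auto)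
  have "\<exists>A B. \<forall>x\<in>{\<alpha><..<\<beta>}. u x = A + B * gf c x"
  proof (rule Hlem[OF ab \<alpha>1(1) \<beta>1(1) uc'])
    fix \<phi> P Q
    assume PQ: "\<alpha> < P" "P < Q" "Q < \<beta>" and tf: "test_fun a \<phi>" and z: "\<forall>x. x \<notin> {P..Q} \<longrightarrow> \<phi> x = 0"
    have "integral {-a..a} (\<lambda>x. c * u x * deriv \<phi> x - u x * deriv (deriv \<phi>) x)
        = integral {-a..a} (\<lambda>x. F x * \<phi> x)" using ws tf unfolding weak_sol_def by blast
    also have "\<dots> = integral {-a..a} (\<lambda>x. 0)"
    proof (rule integral_cong)
      fix x assume x: "x \<in> {-a..a}"
      show "F x * \<phi> x = 0"
      proof (cases "x \<in> {P..Q}")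
        case True
        hence "u x < 0" using neg PQ by auto
        thus ?thesis using F0 x by simp
      next
        case False thus ?thesis using z by simp
      qed
    qed
    finally show "integral {-a..a} (\<lambda>x. c * u x * deriv \<phi> x - u x * deriv (deriv \<phi>) x) = 0" by simp
  qed
  then obtain A B where AB: "\<forall>x\<in>{\<alpha><..<\<beta>}. u x = A + B * gf c x" by blast
  have gc: "continuous_on {\<alpha>..\<beta>} (\<lambda>x. A + B * gf c x)" by (intro continuous_intros gf_cont)
  have "u \<alpha> = A + B * gf c \<alpha>" by (rule closure_eq[OF ab uc' gc]) (use AB ab in auto)
  moreover have "u \<beta> = A + B * gf c \<beta>" by (rule closure_eq[OF ab uc' gc]) (use AB ab in auto)
  moreover have "u x0 = A + B * gf c x0" using AB ax xb by auto
  moreover have "gf c \<alpha> \<le> gf c x0" "gf c x0 \<le> gf c \<beta>" using gf_mono ax xb by auto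
  ultimately show False using \<alpha>1 \<beta>1 x0
  proof (cases "B \<ge> 0")
    case True
    have "B * gf c \<alpha> \<le> B * gf c x0" using True \<open>gf c \<alpha> \<le> gf c x0\<close> by (simp add: mult_left_mono)
    thus False using \<open>u \<alpha> = _\<close> \<open>u x0 = _\<close> \<alpha>1 x0 by linarith
  next
    case False
    have "B * gf c \<beta> \<le> B * gf c x0" using False \<open>gf c x0 \<le> gf c \<beta>\<close> by (simp add: mult_left_mono_neg)
    thus False using \<open>u \<beta> = _\<close> \<open>u x0 = _\<close> \<beta>1 x0 by linarith
  qed
qed



lemma test_fun_facts:
  assumes "test_fun a \<phi>"
  shows "\<And>x. DERIV \<phi> x :> deriv \<phi> x" "\<And>x. DERIV (deriv \<phi>) x :> deriv (deriv \<phi>) x"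
    and "\<exists>\<epsilon>>0. \<forall>x. a - \<epsilon> \<le> \<bar>x\<bar> \<longrightarrow> \<phi> x = 0 \<and> deriv \<phi> x = 0"
    and "continuous_on S \<phi>" "continuous_on S (deriv \<phi>)" "continuous_on S (deriv (deriv \<phi>))"
proof -
  have d: "\<forall>n x. (deriv ^^ n) \<phi> differentiable (at x)" and
    e: "\<exists>\<epsilon>>0. \<forall>x. a - \<epsilon> \<le> \<bar>x\<bar> \<longrightarrow> \<phi> x = 0" using assms unfolding test_fun_def by auto
  show "\<And>x. DERIV \<phi> x :> deriv \<phi> x" using d[rule_format, of 0] DERIV_of_diff by simp
  show "\<And>x. DERIV (deriv \<phi>) x :> deriv (deriv \<phi>) x" using d[rule_format, of 1] DERIV_of_diff by simp
  show "continuous_on S \<phi>" using d[rule_format, of 0]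
    by (intro continuous_at_imp_continuous_on ballI differentiable_imp_continuous_within) simp
  show "continuous_on S (deriv \<phi>)" using d[rule_format, of 1]
    by (intro continuous_at_imp_continuous_on ballI differentiable_imp_continuous_within) simp
  show "continuous_on S (deriv (deriv \<phi>))" using d[rule_format, of 2]
    by (intro continuous_at_imp_continuous_on ballI differentiable_imp_continuous_within) (simp add: numeral_2_eq_2)
  obtain \<epsilon> where \<epsilon>: "\<epsilon> > 0" "\<forall>x. a - \<epsilon> \<le> \<bar>x\<bar> \<longrightarrow> \<phi> x = 0" using e by blast
  define \<epsilon>' where "\<epsilon>' = \<epsilon>/2"
  have "\<forall>x. a - \<epsilon>' \<le> \<bar>x\<bar> \<longrightarrow> \<phi> x = 0 \<and> deriv \<phi> x = 0"
  proof (intro allI impI conjI)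
    fix x assume x: "a - \<epsilon>' \<le> \<bar>x\<bar>"
    thus "\<phi> x = 0" using \<epsilon> unfolding \<epsilon>'_def by auto
    show "deriv \<phi> x = 0"
    proof (rule deriv_zero_outside[where S="{-(a-\<epsilon>)..a-\<epsilon>}"])
      show "closed {-(a-\<epsilon>)..a-\<epsilon>}" by simp
      show "\<phi> y = 0" if "y \<notin> {-(a-\<epsilon>)..a-\<epsilon>}" for y using that \<epsilon> by auto
      show "x \<notin> {-(a-\<epsilon>)..a-\<epsilon>}" using x \<epsilon> unfolding \<epsilon>'_def by auto
    qed
  qed
  thus "\<exists>\<epsilon>>0. \<forall>x. a - \<epsilon> \<le> \<bar>x\<bar> \<longrightarrow> \<phi> x = 0 \<and> deriv \<phi> x = 0" using \<epsilon> unfolding \<epsilon>'_def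
    by (intro exI[of _ "\<epsilon>/2"]) auto
qed

lemma reg_step:
  fixes u F G :: "real \<Rightarrow> real"
  assumes a: "0 < a" and uc: "continuous_on {-a..a} u" and Gc: "continuous_on UNIV G"
    and ws: "weak_sol a c u F" and FG: "\<And>x. x \<in> {-a..a} \<Longrightarrow> F x = G x"
  shows "\<exists>W W'. (\<forall>x\<in>{-a-1<..<a+1}. DERIV W x :> W' x \<and> DERIV W' x :> (-c * W' x - G x))
            \<and> (\<forall>x\<in>{-a..a}. W x = u x)"
proof -
  define V where "V t = -integral {-a-2 .. t} (\<lambda>y. exp (c*y) * G y)" for t
  have VD: "DERIV V t :> -(exp (c*t) * G t)" if "t \<in> {-a-2<..<a+2}" for t
  proof -
    have "DERIV (\<lambda>t. integral {-a-2 .. t} (\<lambda>y. exp (c*y) * G y)) t :> exp (c*t) * G t"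
      by (rule int_deriv_interior[of _ "a+2"]) (use that in \<open>auto intro!: continuous_intros continuous_on_subset[OF Gc]\<close>)
    thus ?thesis unfolding V_def by (rule DERIV_minus)
  qed
  have Vc: "continuous_on {-a-1 .. a+1} V"
    by (rule continuous_at_imp_continuous_on) (use VD DERIV_isCont in \<open>force\<close>)
  define U where "U x = integral {-a-1 .. x} (\<lambda>t. exp (-c*t) * V t)" for x
  define U' where "U' x = exp (-c*x) * V x" for x
  have UD: "DERIV U x :> U' x" if "x \<in> {-a-1<..<a+1}" for x
    unfolding U_def U'_def
    by (rule int_deriv_interior[of _ "a+1"]) (use that in \<open>auto intro!: continuous_intros Vc\<close>)
  have U'D: "DERIV U' x :> -c * U' x - G x" if "x \<in> {-a-1<..<a+1}" for x
  proof -
    have "DERIV U' x :> -c * exp (-c*x) * V x + exp (-c*x) * (-(exp (c*x) * G x))"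
      unfolding U'_def using VD[of x] that by (auto intro!: derivative_eq_intros)
    moreover have "-c * exp (-c*x) * V x + exp (-c*x) * (-(exp (c*x) * G x)) = -c * U' x - G x"
    proof -
      have e1: "exp (-c*x) * exp (c*x) = 1" by (simp add: exp_minus)
      have "exp (-c*x) * (-(exp (c*x) * G x)) = -((exp (-c*x) * exp (c*x)) * G x)" by (simp add: mult_ac)
      also have "\<dots> = - G x" unfolding e1 by simp
      finally show ?thesis unfolding U'_def by simp
    qed
    ultimately show ?thesis by simp
  qed
  have Uc: "continuous_on {-a..a} U"
    by (rule continuous_at_imp_continuous_on) (use UD DERIV_isCont a in \<open>force\<close>)
  have weakU: "integral {-a..a} (\<lambda>x. c*U x*deriv \<phi> x - U x*deriv (deriv \<phi>) x) = integral {-a..a} (\<lambda>x. G x*\<phi> x)"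
    if tf: "test_fun a \<phi>" for \<phi>
  proof -
    note tff = test_fun_facts[OF tf]
    obtain \<epsilon> where \<epsilon>: "\<epsilon> > 0" "\<forall>x. a - \<epsilon> \<le> \<bar>x\<bar> \<longrightarrow> \<phi> x = 0 \<and> deriv \<phi> x = 0" using tff(3) by blast
    have z: "\<phi> a = 0" "deriv \<phi> a = 0" "\<phi> (-a) = 0" "deriv \<phi> (-a) = 0" using \<epsilon> a by auto
    define K where "K x = c*U x*\<phi> x - U x*deriv \<phi> x + U' x*\<phi> x" for x
    have "((\<lambda>x. (c*U x*deriv \<phi> x - U x*deriv (deriv \<phi>) x) - G x*\<phi> x) has_integral (K a - K (-a))) {-a..a}"
    proof (rule ftc_real)
      fix x assume x: "x \<in> {-a..a}"
      hence xo: "x \<in> {-a-1<..<a+1}" by auto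
      show "DERIV K x :> (c*U x*deriv \<phi> x - U x*deriv (deriv \<phi>) x) - G x*\<phi> x"
        unfolding K_def
        by (auto intro!: derivative_eq_intros UD[OF xo] U'D[OF xo] tff(1) tff(2) simp: algebra_simps)
    qed (use a in auto)
    moreover have "K a - K (-a) = 0" unfolding K_def using z by simp
    ultimately have "integral {-a..a} (\<lambda>x. (c*U x*deriv \<phi> x - U x*deriv (deriv \<phi>) x) - G x*\<phi> x) = 0"
      by (simp add: integral_unique)
    moreover have "continuous_on {-a..a} (deriv \<phi>)" "continuous_on {-a..a} (deriv (deriv \<phi>))" "continuous_on {-a..a} \<phi>"
      using tff by auto
    ultimately show ?thesis
      by (subst (asm) integral_diff) (auto intro!: integrable_continuous_real continuous_intros Uc continuous_on_subset[OF Gc])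
  qed
  have cphi: "continuous_on {-a..a} (deriv \<phi>)" "continuous_on {-a..a} (deriv (deriv \<phi>))" "continuous_on {-a..a} \<phi>"
    if "test_fun a \<phi>" for \<phi>
    using test_fun_facts[OF that] by auto
  have "\<exists>A B. \<forall>x\<in>{-a<..<a}. (\<lambda>x. u x - U x) x = A + B * gf c x"
  proof (rule Hlem[where a=a])
    show "continuous_on {-a..a} (\<lambda>x. u x - U x)" by (intro continuous_intros uc Uc)
    fix \<phi> P Q assume "- a < P" "P < Q" "Q < a" and tf: "test_fun a \<phi>" "\<forall>x. x \<notin> {P..Q} \<longrightarrow> \<phi> x = 0"
    have e: "(\<lambda>x. c * (u x - U x) * deriv \<phi> x - (u x - U x) * deriv (deriv \<phi>) x)
      = (\<lambda>x. (c * u x * deriv \<phi> x - u x * deriv (deriv \<phi>) x) - (c*U x*deriv \<phi> x - U x*deriv (deriv \<phi>) x))"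
      by (simp add: algebra_simps)
    have "integral {-a..a} (\<lambda>x. c * (u x - U x) * deriv \<phi> x - (u x - U x) * deriv (deriv \<phi>) x)
      = integral {-a..a} (\<lambda>x. c * u x * deriv \<phi> x - u x * deriv (deriv \<phi>) x)
        - integral {-a..a} (\<lambda>x. c*U x*deriv \<phi> x - U x*deriv (deriv \<phi>) x)"
      unfolding e using cphi[OF tf(1)]
      by (intro integral_diff) (auto intro!: integrable_continuous_real continuous_intros Uc uc)
    also have "\<dots> = integral {-a..a} (\<lambda>x. F x * \<phi> x) - integral {-a..a} (\<lambda>x. G x*\<phi> x)"
      using ws tf(1) weakU[OF tf(1)] unfolding weak_sol_def by simp
    also have "integral {-a..a} (\<lambda>x. F x * \<phi> x) = integral {-a..a} (\<lambda>x. G x*\<phi> x)"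
      using FG by (intro integral_cong) auto
    finally show "integral {-a..a} (\<lambda>x. c * (u x - U x) * deriv \<phi> x - (u x - U x) * deriv (deriv \<phi>) x) = 0"
      by simp
  qed (use a in auto)
  then obtain A B where AB: "\<forall>x\<in>{-a<..<a}. u x - U x = A + B * gf c x" by auto
  define W where "W x = U x + A + B * gf c x" for x
  define W' where "W' x = U' x + B * exp (-c*x)" for x
  have WD: "DERIV W x :> W' x \<and> DERIV W' x :> (-c * W' x - G x)" if "x \<in> {-a-1<..<a+1}" for x
  proof
    show "DERIV W x :> W' x" unfolding W_def W'_def
      using UD[OF that] gf_DERIV[of c x] by (auto intro!: derivative_eq_intros)
    have "DERIV W' x :> (-c * U' x - G x) + B * (exp (-c*x) * (-c))" unfolding W'_def
      using U'D[OF that] by (auto intro!: derivative_eq_intros)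
    thus "DERIV W' x :> (-c * W' x - G x)" unfolding W'_def by (simp add: algebra_simps)
  qed
  have Wc: "continuous_on {-a..a} W" unfolding W_def by (intro continuous_intros Uc gf_cont)
  have "W x = u x" if "x \<in> {-a..a}" for x
  proof (rule closure_eq[OF _ Wc uc _ that])
    fix y assume "y \<in> {-a<..<a}"
    hence "u y - U y = A + B * gf c y" using AB by blast
    thus "W y = u y" unfolding W_def by simp
  qed (use a in auto)
  thus ?thesis using WD by blast
qed



lemma min2:
  fixes f f' f2 :: "real \<Rightarrow> real"
  assumes d: "0 < d" and D1: "\<And>y. y \<in> {x0-d<..<x0+d} \<Longrightarrow> DERIV f y :> f' y"
    and D2: "\<And>y. y \<in> {x0-d<..<x0+d} \<Longrightarrow> DERIV f' y :> f2 y"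
    and c2: "isCont f2 x0" and z: "f' x0 = 0" and neg: "f2 x0 < 0"
  shows "\<exists>y\<in>{x0-d<..<x0+d}. f y < f x0"
proof -
  have "(\<lambda>y. - f2 y) \<midarrow>x0\<rightarrow> - f2 x0" using c2 by (simp add: isCont_def tendsto_minus)
  from LIM_fun_gt_zero[OF this] neg obtain r where r: "0 < r" "\<And>y. y \<noteq> x0 \<and> \<bar>x0 - y\<bar> < r \<longrightarrow> 0 < - f2 y"
    by auto
  define \<delta> where "\<delta> = min r d / 2"
  have \<delta>: "0 < \<delta>" "\<delta> < r" "\<delta> < d" unfolding \<delta>_def using r d by auto
  obtain \<xi> where \<xi>: "x0 < \<xi>" "\<xi> < x0 + \<delta>" "f (x0+\<delta>) - f x0 = (x0 + \<delta> - x0) * f' \<xi>"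
    using MVT2[of x0 "x0+\<delta>" f f'] D1 \<delta> by auto
  obtain \<eta> where \<eta>: "x0 < \<eta>" "\<eta> < \<xi>" "f' \<xi> - f' x0 = (\<xi> - x0) * f2 \<eta>"
    using MVT2[of x0 \<xi> f' f2] D2 \<delta> \<xi> by auto
  have "f2 \<eta> < 0" using r(2)[of \<eta>] \<eta> \<xi> \<delta> by auto
  hence "f' \<xi> < 0" using \<eta> z by (simp add: mult_pos_neg)
  hence "\<delta> * f' \<xi> < 0" using \<delta>(1) by (simp add: mult_pos_neg)
  hence "f (x0+\<delta>) < f x0" using \<xi> by simp
  thus ?thesis using \<delta> by (intro bexI[of _ "x0+\<delta>"]) auto
qed

lemma two_ab: "2*\<bar>x\<bar>*\<bar>y\<bar> \<le> x^2 + (y::real)^2"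
proof -
  have "0 \<le> (\<bar>x\<bar> - \<bar>y\<bar>)^2" by simp
  thus ?thesis by (simp add: power2_eq_square algebra_simps)
qed

lemma energy_bound:
  fixes w w1 m m1 gw gm c C :: real
  assumes g1: "\<bar>gw\<bar> \<le> C*\<bar>w\<bar> + C*\<bar>m\<bar>" and g2: "\<bar>gm\<bar> \<le> C*\<bar>w\<bar> + C*\<bar>m\<bar>" and C: "0 \<le> C"
  shows "-(2*w*w1 + 2*w1*(-c*w1 - gw) + 2*m*m1 + 2*m1*(-c*m1 - gm)) \<le> (2 + 4*\<bar>c\<bar> + 8*C) * (w^2 + w1^2 + m^2 + m1^2)"
proof -
  have a1: "2*\<bar>w1\<bar>*\<bar>gw\<bar> \<le> C*(2*\<bar>w1\<bar>*\<bar>w\<bar>) + C*(2*\<bar>w1\<bar>*\<bar>m\<bar>)"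
  proof -
    have "2*\<bar>w1\<bar>*\<bar>gw\<bar> \<le> 2*\<bar>w1\<bar>*(C*\<bar>w\<bar> + C*\<bar>m\<bar>)" using g1 by (simp add: mult_left_mono)
    thus ?thesis by (simp add: algebra_simps)
  qed
  have a2: "2*\<bar>m1\<bar>*\<bar>gm\<bar> \<le> C*(2*\<bar>m1\<bar>*\<bar>w\<bar>) + C*(2*\<bar>m1\<bar>*\<bar>m\<bar>)"
  proof -
    have "2*\<bar>m1\<bar>*\<bar>gm\<bar> \<le> 2*\<bar>m1\<bar>*(C*\<bar>w\<bar> + C*\<bar>m\<bar>)" using g2 by (simp add: mult_left_mono)
    thus ?thesis by (simp add: algebra_simps)
  qed
  have bb: "C*(2*\<bar>x\<bar>*\<bar>y\<bar>) \<le> C*x^2 + C*y^2" for x y :: real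
  proof -
    have "C*(2*\<bar>x\<bar>*\<bar>y\<bar>) \<le> C*(x^2 + y^2)" using two_ab C by (simp add: mult_left_mono)
    thus ?thesis by (simp add: distrib_left)
  qed
  note b1 = bb[of w1 w] and b2 = bb[of w1 m] and b3 = bb[of m1 w] and b4 = bb[of m1 m]
  have ab: "x*y \<le> \<bar>x\<bar>*\<bar>y\<bar>" "-(x*y) \<le> \<bar>x\<bar>*\<bar>y\<bar>" for x y :: real
    by (metis abs_ge_self abs_mult, metis abs_ge_minus_self abs_mult)
  have c1: "-(2*w*w1) \<le> w^2 + w1^2" using two_ab[of w w1] ab(2)[of w w1] by simp
  have c2: "-(2*m*m1) \<le> m^2 + m1^2" using two_ab[of m m1] ab(2)[of m m1] by simp
  have c3: "2*w1*gw \<le> 2*\<bar>w1\<bar>*\<bar>gw\<bar>" using ab(1)[of w1 gw] by simp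
  have c4: "2*m1*gm \<le> 2*\<bar>m1\<bar>*\<bar>gm\<bar>" using ab(1)[of m1 gm] by simp
  have c5: "c*w1^2 \<le> \<bar>c\<bar>*w1^2" "c*m1^2 \<le> \<bar>c\<bar>*m1^2" by (simp_all add: mult_right_mono)
  have nn: "0 \<le> w^2" "0 \<le> w1^2" "0 \<le> m^2" "0 \<le> m1^2" "0 \<le> \<bar>c\<bar>*w1^2" "0 \<le> \<bar>c\<bar>*m1^2"
    "0 \<le> \<bar>c\<bar>*w^2" "0 \<le> \<bar>c\<bar>*m^2" "0 \<le> C*w^2" "0 \<le> C*w1^2" "0 \<le> C*m^2" "0 \<le> C*m1^2"
    using C by simp_all
  have "-(2*w*w1 + 2*w1*(-c*w1 - gw) + 2*m*m1 + 2*m1*(-c*m1 - gm))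
      = -(2*w*w1) + 2*(c*w1^2) + 2*w1*gw - (2*m*m1) + 2*(c*m1^2) + 2*m1*gm"
    by (simp add: algebra_simps power2_eq_square)
  also have "\<dots> \<le> 2*w^2 + 2*w1^2 + 2*m^2 + 2*m1^2 + 4*(\<bar>c\<bar>*w^2) + 4*(\<bar>c\<bar>*w1^2) + 4*(\<bar>c\<bar>*m^2) + 4*(\<bar>c\<bar>*m1^2)
      + 8*(C*w^2) + 8*(C*w1^2) + 8*(C*m^2) + 8*(C*m1^2)"
    using a1 a2 b1 b2 b3 b4 c1 c2 c3 c4 c5 nn by linarith
  also have "\<dots> = (2 + 4*\<bar>c\<bar> + 8*C) * (w^2 + w1^2 + m^2 + m1^2)"
    by (simp add: algebra_simps)
  finally show ?thesis .
qed



lemma abs_comb: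
  fixes x z \<alpha> \<beta> C :: real
  assumes "\<bar>\<alpha>\<bar> \<le> C" "\<bar>\<beta>\<bar> \<le> C"
  shows "\<bar>x*\<alpha> + \<beta>*z\<bar> \<le> C*\<bar>x\<bar> + C*\<bar>z\<bar>"
proof -
  have "\<bar>x*\<alpha> + \<beta>*z\<bar> \<le> \<bar>x\<bar>*\<bar>\<alpha>\<bar> + \<bar>\<beta>\<bar>*\<bar>z\<bar>" by (metis abs_mult abs_triangle_ineq)
  also have "\<dots> \<le> \<bar>x\<bar>*C + C*\<bar>z\<bar>" using assms by (intro add_mono mult_left_mono mult_right_mono) auto
  finally show ?thesis by (simp add: mult.commute)
qed

lemma bound_on:
  fixes f :: "real \<Rightarrow> real"
  assumes "continuous_on {s..t} f"
  obtains B where "\<forall>y\<in>{s..t}. \<bar>f y\<bar> \<le> B"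
proof -
  have "bounded (f ` {s..t})" by (rule compact_imp_bounded[OF compact_continuous_image[OF assms compact_Icc]])
  then obtain B where "\<forall>z\<in>f ` {s..t}. norm z \<le> B" unfolding bounded_iff by blast
  thus ?thesis using that by auto
qed

theorem mainTheorem4:
  fixes r K \<mu> a c :: real and w m :: "real \<Rightarrow> real"
  assumes "assumption1 r K \<mu>" and "0 < a" and "Pa r K \<mu> a c w m"
  shows "\<forall>x\<in>{-a..<a}. 0 < w x \<and> 0 < m x"
proof -
  have a: "0 < a" by fact
  have wc: "continuous_on {-a..a} w" and mc: "continuous_on {-a..a} m"
    and wsw: "weak_sol a c w (\<lambda>x. fw \<mu> (w x) (m x) * chi (w x) (m x))"
    and wsm: "weak_sol a c m (\<lambda>x. fm r K \<mu> (w x) (m x) * chi (w x) (m x))"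
    and bw: "w (-a) = fst (eqpt r K \<mu>)" "m (-a) = snd (eqpt r K \<mu>)" "w a = 0" "m a = 0"
    using assms(3) unfolding Pa_def by auto
  have w0: "0 < w (-a)" "0 < m (-a)" using eqpt_props[OF assms(1)] bw by auto
  have par: "0 < \<mu>" "0 < K" "1 < r" using assms(1) unfolding assumption1_def by auto
  have wnn: "\<forall>x\<in>{-a..a}. 0 \<le> w x"
    by (rule nonneg_step[OF a wc w0(1) bw(3) _ wsw]) (simp add: chi_def)
  have mnn: "\<forall>x\<in>{-a..a}. 0 \<le> m x"
    by (rule nonneg_step[OF a mc w0(2) bw(4) _ wsm]) (simp add: chi_def)
  define cl where "cl x = max (-a) (min a x)" for x
  have clin: "cl x \<in> {-a..a}" for x unfolding cl_def using a by auto
  have clid: "x \<in> {-a..a} \<Longrightarrow> cl x = x" for x unfolding cl_def by auto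
  have clc: "continuous_on UNIV cl" unfolding cl_def by (intro continuous_intros)
  have wcl: "continuous_on UNIV (\<lambda>x. w (cl x))" by (rule continuous_on_compose2[OF wc clc]) (use clin in auto)
  have mcl: "continuous_on UNIV (\<lambda>x. m (cl x))" by (rule continuous_on_compose2[OF mc clc]) (use clin in auto)
  define Gw where "Gw x = fw \<mu> (w (cl x)) (m (cl x))" for x
  define Gm where "Gm x = fm r K \<mu> (w (cl x)) (m (cl x))" for x
  have Gwc: "continuous_on UNIV Gw" unfolding Gw_def fw_def by (intro continuous_intros wcl mcl)
  have Gmc: "continuous_on UNIV Gm" unfolding Gm_def fm_def using par by (intro continuous_intros wcl mcl) auto
  obtain W W' where WD: "\<forall>x\<in>{-a-1<..<a+1}. DERIV W x :> W' x \<and> DERIV W' x :> (-c * W' x - Gw x)"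
    and Wu: "\<forall>x\<in>{-a..a}. W x = w x"
    using reg_step[OF a wc Gwc wsw] wnn mnn clid unfolding Gw_def chi_def by auto
  obtain M M' where MD: "\<forall>x\<in>{-a-1<..<a+1}. DERIV M x :> M' x \<and> DERIV M' x :> (-c * M' x - Gm x)"
    and Mu: "\<forall>x\<in>{-a..a}. M x = m x"
    using reg_step[OF a mc Gmc wsm] wnn mnn clid unfolding Gm_def chi_def by auto
  show ?thesis
  proof (rule ccontr)
    assume "\<not> (\<forall>x\<in>{-a..<a}. 0 < w x \<and> 0 < m x)"
    then obtain x0 where x0: "x0 \<in> {-a..<a}" "\<not> (0 < w x0 \<and> 0 < m x0)" by blast
    have wx0: "0 \<le> w x0" "0 \<le> m x0" using wnn mnn x0 by auto
    have x0a: "-a < x0" using x0 w0 by (cases "x0 = -a") auto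
    define d where "d = min (x0 + a) (a - x0)"
    have d: "0 < d" unfolding d_def using x0a x0 by auto
    have dd: "d \<le> x0 + a" "d \<le> a - x0" unfolding d_def by auto
    have nb: "y \<in> {-a<..<a}" if "\<bar>x0 - y\<bar> < d" for y using that dd by (auto simp: abs_less_iff)
    have nb': "y \<in> {-a<..<a}" if "y \<in> {x0-d<..<x0+d}" for y using that dd by auto
    have Wnn: "0 \<le> W y" "0 \<le> M y" if "y \<in> {-a..a}" for y using that Wu Mu wnn mnn by auto
    have x0i: "x0 \<in> {-a..a}" "x0 \<in> {-a-1<..<a+1}" using x0 by auto
    have W'0: "W' x0 = 0" if "W x0 = 0"
    proof -
      have h1: "DERIV W x0 :> W' x0" using WD x0i(2) by blast
      have h2: "\<forall>y. \<bar>x0 - y\<bar> < d \<longrightarrow> W x0 \<le> W y"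
      proof (intro allI impI)
        fix y assume "\<bar>x0 - y\<bar> < d"
        hence "y \<in> {-a..a}" using nb by force
        thus "W x0 \<le> W y" using Wnn that by simp
      qed
      show ?thesis using DERIV_local_min[OF h1 d h2] .
    qed
    have M'0: "M' x0 = 0" if "M x0 = 0"
    proof -
      have h1: "DERIV M x0 :> M' x0" using MD x0i(2) by blast
      have h2: "\<forall>y. \<bar>x0 - y\<bar> < d \<longrightarrow> M x0 \<le> M y"
      proof (intro allI impI)
        fix y assume "\<bar>x0 - y\<bar> < d"
        hence "y \<in> {-a..a}" using nb by force
        thus "M x0 \<le> M y" using Wnn that by simp
      qed
      show ?thesis using DERIV_local_min[OF h1 d h2] .
    qed
    have icW: "isCont (\<lambda>y. -c * W' y - Gw y) x0"
      using WD x0i Gwc by (intro continuous_intros DERIV_isCont[of W']) (auto simp: continuous_on_eq_continuous_at)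
    have icM: "isCont (\<lambda>y. -c * M' y - Gm y) x0"
      using MD x0i Gmc by (intro continuous_intros DERIV_isCont[of M']) (auto simp: continuous_on_eq_continuous_at)
    have dsub: "y \<in> {-a-1<..<a+1}" if "y \<in> {x0-d<..<x0+d}" for y using nb'[OF that] by auto
    have both: "w x0 = 0 \<and> m x0 = 0"
    proof -
      have "w x0 = 0 \<or> m x0 = 0" using x0(2) wx0 by auto
      moreover have "m x0 = 0" if wz: "w x0 = 0"
      proof (rule ccontr)
        assume "m x0 \<noteq> 0" hence mp: "0 < m x0" using wx0 by simp
        have Wz: "W x0 = 0" using wz Wu x0i by auto
        have "-c * W' x0 - Gw x0 < 0"
          using W'0[OF Wz] mp par clid[OF x0i(1)] wz unfolding Gw_def fw_def by simp
        note neg = this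
        have D1: "DERIV W y :> W' y" if "y \<in> {x0-d<..<x0+d}" for y using WD dsub[OF that] by blast
        have D2: "DERIV W' y :> -c * W' y - Gw y" if "y \<in> {x0-d<..<x0+d}" for y using WD dsub[OF that] by blast
        from min2[OF d D1 D2 icW W'0[OF Wz] neg] obtain y where y: "y \<in> {x0-d<..<x0+d}" "W y < W x0"
          by blast
        have "y \<in> {-a..a}" using nb'[OF y(1)] by simp
        thus False using Wnn y(2) Wz by force
      qed
      moreover have "w x0 = 0" if mz: "m x0 = 0"
      proof (rule ccontr)
        assume "w x0 \<noteq> 0" hence wp: "0 < w x0" using wx0 by simp
        have Mz: "M x0 = 0" using mz Mu x0i by auto
        have "-c * M' x0 - Gm x0 < 0"
          using M'0[OF Mz] wp par clid[OF x0i(1)] mz unfolding Gm_def fm_def by simp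
        note neg = this
        have D1: "DERIV M y :> M' y" if "y \<in> {x0-d<..<x0+d}" for y using MD dsub[OF that] by blast
        have D2: "DERIV M' y :> -c * M' y - Gm y" if "y \<in> {x0-d<..<x0+d}" for y using MD dsub[OF that] by blast
        from min2[OF d D1 D2 icM M'0[OF Mz] neg] obtain y where y: "y \<in> {x0-d<..<x0+d}" "M y < M x0"
          by blast
        have "y \<in> {-a..a}" using nb'[OF y(1)] by simp
        thus False using Wnn y(2) Mz by force
      qed
      ultimately show ?thesis by blast
    qed
    have z0: "W x0 = 0" "M x0 = 0" using both Wu Mu x0i by auto
    have z1: "W' x0 = 0" "M' x0 = 0" using W'0 M'0 z0 by auto
    obtain B1 where B1: "\<forall>y\<in>{-a..a}. \<bar>w y\<bar> \<le> B1" using bound_on[OF wc] by blast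
    obtain B2 where B2: "\<forall>y\<in>{-a..a}. \<bar>m y\<bar> \<le> B2" using bound_on[OF mc] by blast
    define Bd where "Bd = max (max B1 B2) 0"
    have Bd: "\<bar>w y\<bar> \<le> Bd" "\<bar>m y\<bar> \<le> Bd" if "y \<in> {-a..a}" for y using B1 B2 that unfolding Bd_def by force+
    have Bd0: "0 \<le> Bd" unfolding Bd_def by simp
    define C where "C = 1 + \<mu> + 2*Bd + r*(1 + 2*Bd/K)"
    have rpart: "0 \<le> r*(1 + 2*Bd/K)" using par Bd0 by simp
    have C0: "0 \<le> C" "\<mu> \<le> C" unfolding C_def using rpart par Bd0 by auto
    have gw: "\<bar>Gw y\<bar> \<le> C*\<bar>W y\<bar> + C*\<bar>M y\<bar>" if y: "y \<in> {-a..a}" for y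
    proof -
      have e: "Gw y = w y * (1 - w y - m y - \<mu>) + \<mu> * m y" unfolding Gw_def fw_def clid[OF y] by (simp add: algebra_simps)
      have "\<bar>1 - w y - m y - \<mu>\<bar> \<le> 1 + Bd + Bd + \<mu>" using Bd[OF y] par by (simp add: abs_le_iff)
      hence "\<bar>1 - w y - m y - \<mu>\<bar> \<le> C" unfolding C_def using rpart by linarith
      from abs_comb[OF this] C0 have "\<bar>Gw y\<bar> \<le> C*\<bar>w y\<bar> + C*\<bar>m y\<bar>" unfolding e using par by simp
      thus ?thesis using Wu Mu y by simp
    qed
    have gm: "\<bar>Gm y\<bar> \<le> C*\<bar>W y\<bar> + C*\<bar>M y\<bar>" if y: "y \<in> {-a..a}" for y
    proof -
      have e: "Gm y = m y * (r * (1 - (w y + m y)/K) - \<mu>) + \<mu> * w y" unfolding Gm_def fm_def clid[OF y] by (simp add: algebra_simps)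
      have "\<bar>(w y + m y)/K\<bar> \<le> 2*Bd/K" using Bd[OF y] par by (simp add: abs_divide divide_right_mono)
      hence "\<bar>1 - (w y + m y)/K\<bar> \<le> 1 + 2*Bd/K" by linarith
      hence "r * \<bar>1 - (w y + m y)/K\<bar> \<le> r * (1 + 2*Bd/K)" using par by (simp add: mult_left_mono)
      hence "\<bar>r * (1 - (w y + m y)/K)\<bar> \<le> r * (1 + 2*Bd/K)" using par by (simp add: abs_mult)
      hence "\<bar>r * (1 - (w y + m y)/K) - \<mu>\<bar> \<le> C" unfolding C_def using par Bd0 by linarith
      from abs_comb[OF this] C0 have "\<bar>Gm y\<bar> \<le> C*\<bar>m y\<bar> + C*\<bar>w y\<bar>" unfolding e using par by simp
      thus ?thesis using Wu Mu y by simp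
    qed
    define L where "L = 2 + 4*\<bar>c\<bar> + 8*C"
    define E where "E y = W y^2 + W' y^2 + M y^2 + M' y^2" for y
    define Ed where "Ed y = 2*W y*W' y + 2*W' y*(-c*W' y - Gw y) + 2*M y*M' y + 2*M' y*(-c*M' y - Gm y)" for y
    have ED: "DERIV E y :> Ed y" if "y \<in> {-a-1<..<a+1}" for y
      unfolding E_def Ed_def using WD MD that
      by (auto intro!: derivative_eq_intros simp: power2_eq_square algebra_simps)
    define g where "g y = exp (L*y) * E y" for y
    have "g (-a) \<le> g x0"
    proof (rule DERIV_nonneg_imp_nondecreasing[of "-a" x0 g])
      show "-a \<le> x0" using x0a by simp
      fix y assume y: "-a \<le> y" "y \<le> x0"
      hence yi: "y \<in> {-a..a}" "y \<in> {-a-1<..<a+1}" using x0 by auto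
      have "DERIV g y :> L * exp (L*y) * E y + exp (L*y) * Ed y"
        unfolding g_def using ED[OF yi(2)] by (auto intro!: derivative_eq_intros)
      moreover have "0 \<le> L * exp (L*y) * E y + exp (L*y) * Ed y"
      proof -
        have "- Ed y \<le> L * E y" unfolding Ed_def E_def L_def
          by (rule energy_bound[OF gw[OF yi(1)] gm[OF yi(1)] C0(1)])
        hence "0 \<le> L * E y + Ed y" by simp
        hence "0 \<le> exp (L*y) * (L * E y + Ed y)" by simp
        thus ?thesis by (simp add: algebra_simps)
      qed
      ultimately show "\<exists>D. DERIV g y :> D \<and> 0 \<le> D" by blast
    qed
    moreover have "g x0 = 0" unfolding g_def E_def using z0 z1 by simp
    moreover have "0 < g (-a)"
    proof -
      have "W (-a) = w (-a)" using Wu a by auto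
      hence "0 < W (-a)^2" using w0 by simp
      hence "0 < E (-a)" unfolding E_def by (smt (verit) zero_le_power2)
      thus ?thesis unfolding g_def by simp
    qed
    ultimately show False by simp
  qed
qed

end
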